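(* Let $f_1,\dots,f_h$ ($h\ge 2$) be germs of biholomorphisms of $\mathbb{C}^n$ fixing the origin such that the linear parts $\Lambda_1,\Lambda_2$ of $f_1,f_2$ are almost simultaneously Jordanizable and have no common resonances, i.e. $\mathrm{Res}_j(\Lambda_1)\cap\mathrm{Res}_j(\Lambda_2)=\emptyset$ for $j=1,\dots,n$. If $f_1$ and $f_2$ commute with $f_k$ for every $k=1,\dots,h$, then $f_1,\dots,f_h$ are simultaneously formally linearizable.
   Context: Matrices $M_1,M_2$ are almost simultaneously Jordanizable if there is an invertible $A$ such that each $A^{-1}M_kA$ is lower triangular with diagonal entries $\lambda_{k,1},\dots,\lambda_{k,n}$, entries $\varepsilon_{k,j}$ in position $(j+1,j)$, zeros elsewhere, and $\varepsilon_{k,j}\ne0\Rightarrow\lambda_{k,j}=\lambda_{k,j+1}$. In that basis $\Lambda_k$ denotes the tuple $(\lambda_{k,1},\dots,\lambda_{k,n})$ and $\mathrm{Res}_j(\Lambda_k)=\{Q\in\mathbb{N}^n:|Q|\ge2,\ \prod_i\lambda_{k,i}^{q_i}=\lambda_{k,j}\}$. Simultaneously formally linearizable means there is an invertible formal power series map $\varphi$, $\varphi(0)=0$, with $\varphi^{-1}\circ f_k\circ\varphi$ linear for all $k$. *)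

theory Defs
  imports Complex_Main "Jordan_Normal_Form.Matrix"
begin

text \<open>Coordinates of C^n are indexed by 0..n-1. A multi-index is a function
  Q :: nat => nat vanishing outside {0..<n}. A formal power series map of C^n (fixing or not
  the origin) is F :: nat => (nat => nat) => complex, where F i Q is the coefficient of z^Q
  in the i-th component (only i < n and Q in multi_idx n are relevant). A germ of
  holomorphic map at 0 is identified with its (convergent) Taylor series.\<close>

definition multi_idx :: "nat \<Rightarrow> (nat \<Rightarrow> nat) set" where
  "multi_idx n = {Q. \<forall>i. n \<le> i \<longrightarrow> Q i = 0}"

definition mdeg :: "nat \<Rightarrow> (nat \<Rightarrow> nat) \<Rightarrow> nat" where
  "mdeg n Q = (\<Sum>i<n. Q i)"

definition unit_idx :: "nat \<Rightarrow> nat \<Rightarrow> nat" where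
  "unit_idx j = (\<lambda>i. if i = j then 1 else 0)"

type_synonym fps_n = "(nat \<Rightarrow> nat) \<Rightarrow> complex"
type_synonym fmap = "nat \<Rightarrow> fps_n"

definition ps_one :: fps_n where
  "ps_one Q = (if (\<forall>i. Q i = 0) then 1 else 0)"

definition ps_mult :: "fps_n \<Rightarrow> fps_n \<Rightarrow> fps_n" where
  "ps_mult a b Q = (\<Sum>P\<in>{P. \<forall>i. P i \<le> Q i}. a P * b (\<lambda>i. Q i - P i))"

definition ps_pow :: "fps_n \<Rightarrow> nat \<Rightarrow> fps_n" where
  "ps_pow a k = ((ps_mult a) ^^ k) ps_one"

fun ps_prodpow :: "fmap \<Rightarrow> (nat \<Rightarrow> nat) \<Rightarrow> nat \<Rightarrow> fps_n" where
  "ps_prodpow G P 0 = ps_one"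
| "ps_prodpow G P (Suc m) = ps_mult (ps_prodpow G P m) (ps_pow (G m) (P m))"

text \<open>Formal composition F o G (meaningful when G has no constant term).\<close>
definition fcomp :: "nat \<Rightarrow> fmap \<Rightarrow> fmap \<Rightarrow> fmap" where
  "fcomp n F G i Q =
     (\<Sum>P\<in>{P\<in>multi_idx n. mdeg n P \<le> mdeg n Q}. F i P * ps_prodpow G P n Q)"

definition fmap_eq :: "nat \<Rightarrow> fmap \<Rightarrow> fmap \<Rightarrow> bool" where
  "fmap_eq n F G \<longleftrightarrow> (\<forall>i<n. \<forall>Q\<in>multi_idx n. F i Q = G i Q)"

definition fid :: fmap where
  "fid i Q = (if Q = unit_idx i then 1 else 0)"

definition fixes_origin :: "nat \<Rightarrow> fmap \<Rightarrow> bool" where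
  "fixes_origin n F \<longleftrightarrow> (\<forall>i<n. F i (\<lambda>_. 0) = 0)"

definition formal_inverse :: "nat \<Rightarrow> fmap \<Rightarrow> fmap \<Rightarrow> bool" where
  "formal_inverse n F G \<longleftrightarrow> fixes_origin n G \<and>
     fmap_eq n (fcomp n F G) fid \<and> fmap_eq n (fcomp n G F) fid"

text \<open>Convergent power series map (= germ of holomorphic map at 0).\<close>
definition convergent_map :: "nat \<Rightarrow> fmap \<Rightarrow> bool" where
  "convergent_map n F \<longleftrightarrow> (\<exists>r>0. \<forall>i<n.
     summable (\<lambda>d. \<Sum>Q\<in>{Q\<in>multi_idx n. mdeg n Q = d}. norm (F i Q) * r ^ d))"

definition biholo_germ :: "nat \<Rightarrow> fmap \<Rightarrow> bool" where
  "biholo_germ n F \<longleftrightarrow> convergent_map n F \<and> fixes_origin n F \<and>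
     (\<exists>G. convergent_map n G \<and> formal_inverse n F G)"

definition lin_part :: "nat \<Rightarrow> fmap \<Rightarrow> complex mat" where
  "lin_part n F = mat n n (\<lambda>(i,j). F i (unit_idx j))"

definition is_linear_map :: "nat \<Rightarrow> fmap \<Rightarrow> bool" where
  "is_linear_map n F \<longleftrightarrow> (\<forall>i<n. \<forall>Q\<in>multi_idx n. mdeg n Q \<noteq> 1 \<longrightarrow> F i Q = 0)"

definition simul_formally_linearizable :: "nat \<Rightarrow> nat set \<Rightarrow> (nat \<Rightarrow> fmap) \<Rightarrow> bool" where
  "simul_formally_linearizable n K f \<longleftrightarrow> (\<exists>\<phi> \<psi>. fixes_origin n \<phi> \<and> formal_inverse n \<phi> \<psi> \<and>
     (\<forall>k\<in>K. is_linear_map n (fcomp n \<psi> (fcomp n (f k) \<phi>))))"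

definition almost_jordan_form :: "nat \<Rightarrow> complex mat \<Rightarrow> bool" where
  "almost_jordan_form n T \<longleftrightarrow> (\<forall>i<n. \<forall>j<n.
     (i \<noteq> j \<and> i \<noteq> Suc j \<longrightarrow> T $$ (i,j) = 0) \<and>
     (i = Suc j \<and> T $$ (i,j) \<noteq> 0 \<longrightarrow> T $$ (j,j) = T $$ (i,i)))"

definition almost_simul_jordan_basis ::
  "nat \<Rightarrow> complex mat \<Rightarrow> complex mat \<Rightarrow> complex mat \<Rightarrow> complex mat \<Rightarrow> bool" where
  "almost_simul_jordan_basis n M1 M2 A B \<longleftrightarrow>
     A \<in> carrier_mat n n \<and> B \<in> carrier_mat n n \<and> A * B = 1\<^sub>m n \<and> B * A = 1\<^sub>m n \<and>
     almost_jordan_form n (B * M1 * A) \<and> almost_jordan_form n (B * M2 * A)"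

definition almost_simul_jordanizable :: "nat \<Rightarrow> complex mat \<Rightarrow> complex mat \<Rightarrow> bool" where
  "almost_simul_jordanizable n M1 M2 \<longleftrightarrow> (\<exists>A B. almost_simul_jordan_basis n M1 M2 A B)"

definition Res :: "nat \<Rightarrow> (nat \<Rightarrow> complex) \<Rightarrow> nat \<Rightarrow> (nat \<Rightarrow> nat) set" where
  "Res n lam j = {Q\<in>multi_idx n. 2 \<le> mdeg n Q \<and> (\<Prod>i<n. lam i ^ Q i) = lam j}"

end

theory Submission
  imports Defs
begin

definition box :: "(nat \<Rightarrow> nat) \<Rightarrow> (nat \<Rightarrow> nat) set" where
  "box Q = {P. \<forall>i. P i \<le> Q i}"

definition fsupp :: "(nat \<Rightarrow> nat) \<Rightarrow> bool" where
  "fsupp Q \<longleftrightarrow> finite {i. Q i \<noteq> 0}"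

definition good :: "fps_n \<Rightarrow> bool" where
  "good a \<longleftrightarrow> (\<forall>Q. \<not> fsupp Q \<longrightarrow> a Q = 0)"

definition zi :: "nat \<Rightarrow> nat" where "zi = (\<lambda>_. 0)"

lemma ps_mult_box: "ps_mult a b Q = (\<Sum>P\<in>box Q. a P * b (\<lambda>i. Q i - P i))"
  by (simp add: ps_mult_def box_def)

lemma finite_box: assumes "fsupp Q" shows "finite (box Q)"
proof -
  let ?S = "{i. Q i \<noteq> 0}"
  have fS: "finite ?S" using assms by (simp add: fsupp_def)
  have sub: "(\<lambda>P. restrict P ?S) ` box Q \<subseteq> PiE ?S (\<lambda>i. {..Q i})"
    by (rule image_subsetI, subst restrict_PiE_iff) (auto simp: box_def)
  have fin: "finite (PiE ?S (\<lambda>i. {..Q i}))" using fS by (intro finite_PiE) auto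
  have inj: "inj_on (\<lambda>P. restrict P ?S) (box Q)"
  proof (rule inj_onI)
    fix P P' assume P: "P \<in> box Q" and P': "P' \<in> box Q" and eq: "restrict P ?S = restrict P' ?S"
    show "P = P'"
    proof
      fix i show "P i = P' i"
      proof (cases "Q i = 0")
        case True
        have "P i \<le> Q i" "P' i \<le> Q i" using P P' by (auto simp: box_def)
        then show ?thesis using True by simp
      next
        case False
        have "restrict P ?S i = restrict P' ?S i" using eq by simp
        then show ?thesis using False by simp
      qed
    qed
  qed
  have "finite ((\<lambda>P. restrict P ?S) ` box Q)" using finite_subset[OF sub fin] .
  then show ?thesis using finite_imageD[OF _ inj] by blast
qed

lemma infinite_box: assumes "\<not> fsupp Q" shows "infinite (box Q)"
proof
  assume fin: "finite (box Q)"
  let ?S = "{i. Q i \<noteq> 0}"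
  let ?g = "\<lambda>i. (\<lambda>k. if k = i then Q i else 0)"
  have sub: "?g ` ?S \<subseteq> box Q" by (auto simp: box_def)
  have inj: "inj_on ?g ?S"
  proof (rule inj_onI)
    fix x y assume x: "x \<in> ?S" and e: "?g x = ?g y"
    from fun_cong[OF e, of x] have "Q x = (if x = y then Q y else 0)" by simp
    then show "x = y" using x by (auto split: if_splits)
  qed
  have "finite (?g ` ?S)" using finite_subset[OF sub fin] .
  then have "finite ?S" using finite_imageD[OF _ inj] by blast
  then show False using assms by (simp add: fsupp_def)
qed

lemma multi_idx_fsupp: "Q \<in> multi_idx n \<Longrightarrow> fsupp Q"
  unfolding fsupp_def multi_idx_def
  by (rule finite_subset[of _ "{..<n}"]) (auto simp: not_less[symmetric])

lemma box_multi_idx: "Q \<in> multi_idx n \<Longrightarrow> P \<in> box Q \<Longrightarrow> P \<in> multi_idx n"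
  by (auto simp: multi_idx_def box_def) (metis le_zero_eq)

lemma diff_multi_idx: "Q \<in> multi_idx n \<Longrightarrow> (\<lambda>i. Q i - P i) \<in> multi_idx n"
  by (auto simp: multi_idx_def)

lemma add_multi_idx: "Q \<in> multi_idx n \<Longrightarrow> P \<in> multi_idx n \<Longrightarrow> (\<lambda>i. Q i + P i) \<in> multi_idx n"
  by (auto simp: multi_idx_def)

lemma ps_mult_comm: "ps_mult a b = ps_mult b a"
proof
  fix Q
  show "ps_mult a b Q = ps_mult b a Q"
    unfolding ps_mult_box
    by (rule sum.reindex_bij_witness[of _ "\<lambda>P i. Q i - P i" "\<lambda>P i. Q i - P i"])
       (auto simp: box_def mult.commute)
qed

lemma ps_mult_assoc: "ps_mult (ps_mult a b) c = ps_mult a (ps_mult b c)"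
proof
  fix Q
  show "ps_mult (ps_mult a b) c Q = ps_mult a (ps_mult b c) Q"
  proof (cases "fsupp Q")
    case False
    then show ?thesis unfolding ps_mult_box using infinite_box by simp
  next
    case True
    have fb: "\<And>R. R \<in> box Q \<Longrightarrow> finite (box R)"
    proof -
      fix R assume "R \<in> box Q"
      then have "{i. R i \<noteq> 0} \<subseteq> {i. Q i \<noteq> 0}" by (auto simp: box_def) (metis gr0I le_zero_eq)
      then have "fsupp R" using True finite_subset by (auto simp: fsupp_def)
      then show "finite (box R)" by (rule finite_box)
    qed
    have fb2: "\<And>P. finite (box (\<lambda>i. Q i - P i))"
    proof -
      fix P
      have "{i. Q i - P i \<noteq> 0} \<subseteq> {i. Q i \<noteq> 0}" by auto
      then have "fsupp (\<lambda>i. Q i - P i)" using True finite_subset by (auto simp: fsupp_def)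
      then show "finite (box (\<lambda>i. Q i - P i))" by (rule finite_box)
    qed
    have "ps_mult (ps_mult a b) c Q =
      (\<Sum>(R,P)\<in>Sigma (box Q) box. a P * b (\<lambda>i. R i - P i) * c (\<lambda>i. Q i - R i))"
      unfolding ps_mult_box
      by (subst sum.Sigma[symmetric]) (auto simp: finite_box True fb sum_distrib_right)
    also have "\<dots> = (\<Sum>(P,S)\<in>Sigma (box Q) (\<lambda>P. box (\<lambda>i. Q i - P i)).
                      a P * (b S * c (\<lambda>i. Q i - P i - S i)))"
      apply (rule sum.reindex_bij_witness[of _ "\<lambda>(P,S). (\<lambda>i. P i + S i, P)" "\<lambda>(R,P). (P, \<lambda>i. R i - P i)"])
      apply (auto simp: box_def)
        apply (metis le_trans)
       apply (metis diff_le_mono)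
      apply (metis add.commute le_diff_conv2)
      done
    also have "\<dots> = ps_mult a (ps_mult b c) Q"
      unfolding ps_mult_box
      by (subst sum.Sigma[symmetric]) (auto simp: finite_box True fb2 sum_distrib_left)
    finally show ?thesis .
  qed
qed

interpretation psm: abel_semigroup ps_mult
proof
  show "\<And>a b c. ps_mult (ps_mult a b) c = ps_mult a (ps_mult b c)" by (rule ps_mult_assoc)
  show "\<And>a b. ps_mult a b = ps_mult b a" by (rule ps_mult_comm)
qed

lemma ps_one_eq: "ps_one Q = (if Q = zi then 1 else 0)"
  by (auto simp: ps_one_def zi_def)

lemma fsupp_zi: "fsupp zi" by (simp add: fsupp_def zi_def)

lemma ps_mult_one_fsupp: assumes "fsupp Q" shows "ps_mult a ps_one Q = a Q"
proof -
  have "ps_mult a ps_one Q = (\<Sum>P\<in>box Q. if P = Q then a P else 0)"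
    unfolding ps_mult_box
    apply (rule sum.cong, simp)
    apply (auto simp: ps_one_eq zi_def box_def fun_eq_iff)
    by (metis diff_is_0_eq le_antisym)
  also have "\<dots> = a Q" using finite_box[OF assms] by (subst sum.delta) (auto simp: box_def)
  finally show ?thesis .
qed

lemma good_mult: "good (ps_mult a b)"
  unfolding good_def ps_mult_box using infinite_box by simp

lemma good_one: "good ps_one"
  unfolding good_def ps_one_eq using fsupp_zi by auto

lemma ps_mult_one: "good a \<Longrightarrow> ps_mult a ps_one = a"
  by (rule ext) (metis good_def ps_mult_box ps_mult_one_fsupp infinite_box sum.infinite)

lemma ps_one_mult: "good a \<Longrightarrow> ps_mult ps_one a = a"
  using ps_mult_one ps_mult_comm by metis

lemma ps_pow_0[simp]: "ps_pow a 0 = ps_one" by (simp add: ps_pow_def)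
lemma ps_pow_Suc: "ps_pow a (Suc k) = ps_mult a (ps_pow a k)" by (simp add: ps_pow_def)

lemma good_pow: "good (ps_pow a k)"
  by (cases k) (auto simp: ps_pow_Suc good_one good_mult)

lemma good_prodpow: "good (ps_prodpow G P N)"
  by (cases N) (auto simp: good_one good_mult)

lemma ps_pow_add: "ps_pow a (k1 + k2) = ps_mult (ps_pow a k1) (ps_pow a k2)"
  by (induction k1) (auto simp: ps_pow_Suc ps_one_mult good_pow psm.assoc)

lemma prodpow_add: "ps_prodpow G (\<lambda>i. P i + R i) N = ps_mult (ps_prodpow G P N) (ps_prodpow G R N)"
  by (induction N) (auto simp: ps_pow_add ps_one_mult good_one psm.assoc psm.left_commute)

lemma ps_mult_cong:
  assumes "Q \<in> multi_idx n" "\<forall>R\<in>multi_idx n. a R = a' R" "\<forall>R\<in>multi_idx n. b R = b' R"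
  shows "ps_mult a b Q = ps_mult a' b' Q"
  unfolding ps_mult_box using assms box_multi_idx diff_multi_idx by (intro sum.cong) auto

lemma ps_mult_one_M: "Q \<in> multi_idx n \<Longrightarrow> ps_mult a ps_one Q = a Q"
  using ps_mult_one_fsupp multi_idx_fsupp by blast
lemma ps_one_mult_M: "Q \<in> multi_idx n \<Longrightarrow> ps_mult ps_one a Q = a Q"
  using ps_mult_one_M ps_mult_comm by metis

lemma ps_mult_add_left: "ps_mult (\<lambda>R. a R + b R) c Q = ps_mult a c Q + ps_mult b c Q"
  unfolding ps_mult_box by (simp add: distrib_right sum.distrib)

lemma ps_mult_sum_left: "ps_mult (\<lambda>R. \<Sum>x\<in>X. f x R) c Q = (\<Sum>x\<in>X. ps_mult (f x) c Q)"
  unfolding ps_mult_box by (simp add: sum_distrib_right sum.swap[of _ "box Q"])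

lemma ps_mult_smult_left: "ps_mult (\<lambda>R. s * a R) c Q = s * ps_mult a c Q"
  unfolding ps_mult_box by (simp add: sum_distrib_left mult.assoc)


definition Md :: "nat \<Rightarrow> nat \<Rightarrow> (nat \<Rightarrow> nat) set" where
  "Md n d = {P\<in>multi_idx n. mdeg n P \<le> d}"

definition S :: "nat \<Rightarrow> fmap \<Rightarrow> fps_n \<Rightarrow> fps_n" where
  "S n G a Q = (\<Sum>P\<in>Md n (mdeg n Q). a P * ps_prodpow G P n Q)"

lemma fcomp_S: "fcomp n F G i = S n G (F i)"
  by (rule ext) (simp add: fcomp_def S_def Md_def)

definition ordge :: "nat \<Rightarrow> nat \<Rightarrow> fps_n \<Rightarrow> bool" where
  "ordge n p a \<longleftrightarrow> (\<forall>Q\<in>multi_idx n. mdeg n Q < p \<longrightarrow> a Q = 0)"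

definition agree :: "nat \<Rightarrow> nat \<Rightarrow> fps_n \<Rightarrow> fps_n \<Rightarrow> bool" where
  "agree n e a b \<longleftrightarrow> (\<forall>Q\<in>multi_idx n. mdeg n Q \<le> e \<longrightarrow> a Q = b Q)"

lemma finite_Md: "finite (Md n d)"
proof -
  have "Md n d \<subseteq> box (\<lambda>i. if i < n then d else 0)"
  proof
    fix P assume P: "P \<in> Md n d"
    show "P \<in> box (\<lambda>i. if i < n then d else 0)"
      unfolding box_def
    proof (intro CollectI allI)
      fix i
      show "P i \<le> (if i < n then d else 0)"
      proof (cases "i < n")
        case True
        have "P i \<le> (\<Sum>j<n. P j)" using True by (intro member_le_sum) auto
        then show ?thesis using P True by (auto simp: Md_def mdeg_def)
      next
        case False then show ?thesis using P by (auto simp: Md_def multi_idx_def)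
      qed
    qed
  qed
  moreover have "fsupp (\<lambda>i. if i < n then d else 0)"
    unfolding fsupp_def by (rule finite_subset[of _ "{..<n}"]) auto
  ultimately show ?thesis using finite_box finite_subset by blast
qed

lemma mdeg_add: "mdeg n (\<lambda>i. P i + R i) = mdeg n P + mdeg n R"
  by (simp add: mdeg_def sum.distrib)

lemma mdeg_box: "P \<in> box Q \<Longrightarrow> mdeg n Q = mdeg n P + mdeg n (\<lambda>i. Q i - P i)"
  unfolding mdeg_def by (subst sum.distrib[symmetric]) (auto simp: box_def intro!: sum.cong)

lemma box_add: "P \<in> box Q \<Longrightarrow> (\<lambda>i. P i + (Q i - P i)) = Q"
  by (auto simp: box_def)

lemma zi_multi_idx[simp]: "zi \<in> multi_idx n" by (simp add: zi_def multi_idx_def)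
lemma mdeg_zi[simp]: "mdeg n zi = 0" by (simp add: zi_def mdeg_def)

lemma mdeg0: assumes "P \<in> multi_idx n" shows "mdeg n P = 0 \<longleftrightarrow> P = zi"
proof
  assume "mdeg n P = 0"
  then have a: "\<forall>i<n. P i = 0" by (simp add: mdeg_def)
  show "P = zi"
  proof
    fix i show "P i = zi i"
      using a assms by (cases "i < n") (auto simp: zi_def multi_idx_def)
  qed
qed simp

lemma Md0: "Md n 0 = {zi}"
  using mdeg0 by (auto simp: Md_def)

lemma unit_idx_multi_idx: "j < n \<Longrightarrow> unit_idx j \<in> multi_idx n"
  by (auto simp: unit_idx_def multi_idx_def)

lemma mdeg_unit_idx: "j < n \<Longrightarrow> mdeg n (unit_idx j) = 1"
  by (simp add: mdeg_def unit_idx_def)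

lemma unit_idx_inj: "unit_idx i = unit_idx j \<longleftrightarrow> i = j"
  by (auto simp: unit_idx_def fun_eq_iff)

lemma unit_idx_neq_zi[simp]: "unit_idx j \<noteq> zi"
  by (auto simp: unit_idx_def zi_def fun_eq_iff)

lemma mdeg1: assumes "P \<in> multi_idx n" "mdeg n P = 1" shows "\<exists>j<n. P = unit_idx j"
proof -
  have "(\<Sum>i<n. P i) = 1" using assms by (simp add: mdeg_def)
  then obtain j where j: "j < n" "P j \<noteq> 0" by (metis lessThan_iff one_neq_zero sum.neutral)
  have "P j + (\<Sum>i\<in>{..<n}-{j}. P i) = 1" using \<open>(\<Sum>i<n. P i) = 1\<close> j
    by (metis finite_lessThan lessThan_iff sum.remove)
  then have Pj: "P j = 1" and rest: "(\<Sum>i\<in>{..<n}-{j}. P i) = 0" using j(2) by arith+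
  have "\<forall>i. P i = unit_idx j i"
  proof
    fix i show "P i = unit_idx j i"
    proof (cases "i = j")
      case True then show ?thesis using Pj by (simp add: unit_idx_def)
    next
      case False
      show ?thesis
      proof (cases "i < n")
        case True then show ?thesis using rest False by (simp add: unit_idx_def)
      next
        case False then show ?thesis using assms(1) \<open>i \<noteq> j\<close> by (simp add: unit_idx_def multi_idx_def)
      qed
    qed
  qed
  then show ?thesis using j by blast
qed

lemma mult_ord:
  assumes "ordge n p a" "ordge n q b" shows "ordge n (p + q) (ps_mult a b)"
  unfolding ordge_def
proof (intro ballI impI)
  fix Q assume Q: "Q \<in> multi_idx n" and d: "mdeg n Q < p + q"
  show "ps_mult a b Q = 0" unfolding ps_mult_box
  proof (rule sum.neutral, intro ballI)
    fix P assume P: "P \<in> box Q"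
    have "mdeg n Q = mdeg n P + mdeg n (\<lambda>i. Q i - P i)" using P by (rule mdeg_box)
    then have "mdeg n P < p \<or> mdeg n (\<lambda>i. Q i - P i) < q" using d by linarith
    then show "a P * b (\<lambda>i. Q i - P i) = 0"
      using assms P Q box_multi_idx diff_multi_idx unfolding ordge_def by auto
  qed
qed

lemma mult_agree:
  assumes "agree n e1 a a'" "agree n e2 b b'" "ordge n p a" "ordge n p a'" "ordge n q b" "ordge n q b'"
  shows "agree n (min (e1 + q) (e2 + p)) (ps_mult a b) (ps_mult a' b')"
  unfolding agree_def
proof (intro ballI impI)
  fix Q assume Q: "Q \<in> multi_idx n" and d: "mdeg n Q \<le> min (e1 + q) (e2 + p)"
  show "ps_mult a b Q = ps_mult a' b' Q" unfolding ps_mult_box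
  proof (rule sum.cong[OF refl])
    fix P assume P: "P \<in> box Q"
    have PM: "P \<in> multi_idx n" using box_multi_idx[OF Q P] .
    have RM: "(\<lambda>i. Q i - P i) \<in> multi_idx n" using diff_multi_idx[OF Q] .
    have dd: "mdeg n Q = mdeg n P + mdeg n (\<lambda>i. Q i - P i)" using P by (rule mdeg_box)
    show "a P * b (\<lambda>i. Q i - P i) = a' P * b' (\<lambda>i. Q i - P i)"
    proof (cases "mdeg n (\<lambda>i. Q i - P i) < q")
      case True then show ?thesis using assms(5,6) RM by (simp add: ordge_def)
    next
      case False
      then have e1: "a P = a' P" using assms(1) dd d PM by (auto simp: agree_def)
      show ?thesis
      proof (cases "mdeg n P < p")
        case True then show ?thesis using assms(3,4) PM by (simp add: ordge_def)
      next
        case False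
        then have "b (\<lambda>i. Q i - P i) = b' (\<lambda>i. Q i - P i)" using assms(2) dd d RM by (auto simp: agree_def)
        then show ?thesis using e1 by simp
      qed
    qed
  qed
qed

lemma ordge_one: "ordge n 0 ps_one" by (simp add: ordge_def)

lemma ordge_mono: "ordge n p a \<Longrightarrow> q \<le> p \<Longrightarrow> ordge n q a"
  by (auto simp: ordge_def)

lemma pow_ord: "ordge n 1 a \<Longrightarrow> ordge n k (ps_pow a k)"
proof (induction k)
  case 0 then show ?case by (simp add: ordge_one)
next
  case (Suc k) then show ?case using mult_ord[of n 1 a k] by (simp add: ps_pow_Suc)
qed

lemma prodpow_ord: "(\<forall>m<N. ordge n 1 (G m)) \<Longrightarrow> ordge n (\<Sum>m<N. P m) (ps_prodpow G P N)"
proof (induction N)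
  case 0 then show ?case by (simp add: ordge_one)
next
  case (Suc N) then show ?case using mult_ord pow_ord by simp
qed

lemma prodpow_ord_M: "(\<forall>m<n. ordge n 1 (G m)) \<Longrightarrow> ordge n (mdeg n P) (ps_prodpow G P n)"
  using prodpow_ord[where N=n and G=G and P=P] by (simp add: mdeg_def)

lemma agree_refl: "agree n e a a" by (simp add: agree_def)

lemma pow_agree:
  assumes "ordge n 1 a" "ordge n 1 a'" "agree n e a a'" "1 \<le> e"
  shows "agree n (e - 1 + k) (ps_pow a k) (ps_pow a' k)"
proof (induction k)
  case 0 then show ?case by (simp add: agree_refl)
next
  case (Suc k)
  have "agree n (min (e + k) (e - 1 + k + 1)) (ps_mult a (ps_pow a k)) (ps_mult a' (ps_pow a' k))"
    by (rule mult_agree[OF assms(3) Suc assms(1,2) pow_ord[OF assms(1)] pow_ord[OF assms(2)]])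
  then show ?case using assms(4) by (simp add: ps_pow_Suc)
qed

lemma prodpow_agree:
  assumes "\<forall>m<N. ordge n 1 (G m) \<and> ordge n 1 (G' m) \<and> agree n e (G m) (G' m)" "1 \<le> e"
  shows "agree n (e - 1 + (\<Sum>m<N. P m)) (ps_prodpow G P N) (ps_prodpow G' P N)"
  using assms(1)
proof (induction N)
  case 0 then show ?case by (simp add: agree_refl)
next
  case (Suc N)
  have h: "ordge n 1 (G N)" "ordge n 1 (G' N)" "agree n e (G N) (G' N)" using Suc.prems by auto
  have IH: "agree n (e - 1 + (\<Sum>m<N. P m)) (ps_prodpow G P N) (ps_prodpow G' P N)"
    using Suc by auto
  have "agree n (min (e - 1 + (\<Sum>m<N. P m) + P N) (e - 1 + P N + (\<Sum>m<N. P m)))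
     (ps_mult (ps_prodpow G P N) (ps_pow (G N) (P N))) (ps_mult (ps_prodpow G' P N) (ps_pow (G' N) (P N)))"
    by (rule mult_agree[OF IH pow_agree[OF h assms(2)]])
       (use Suc.prems prodpow_ord pow_ord h in auto)
  then show ?case by (simp add: add.commute add.left_commute)
qed

lemma fixes_origin_ord: "fixes_origin n G \<Longrightarrow> \<forall>m<n. ordge n 1 (G m)"
  using mdeg0 by (auto simp: fixes_origin_def ordge_def zi_def)

lemma pow_cong: "\<forall>R\<in>multi_idx n. a R = a' R \<Longrightarrow> \<forall>Q\<in>multi_idx n. ps_pow a k Q = ps_pow a' k Q"
  by (induction k) (auto simp: ps_pow_Suc intro: ps_mult_cong)

lemma prodpow_cong: "\<forall>m<N. \<forall>R\<in>multi_idx n. G m R = G' m R \<Longrightarrow>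
   \<forall>Q\<in>multi_idx n. ps_prodpow G P N Q = ps_prodpow G' P N Q"
proof (induction N)
  case 0 then show ?case by simp
next
  case (Suc N)
  have "\<forall>Q\<in>multi_idx n. ps_pow (G N) (P N) Q = ps_pow (G' N) (P N) Q"
    using Suc.prems by (intro pow_cong) auto
  then show ?case using Suc by (auto intro: ps_mult_cong)
qed

lemma S_cong:
  assumes "\<forall>m<n. \<forall>R\<in>multi_idx n. G m R = G' m R" "\<forall>R\<in>multi_idx n. a R = a' R" "Q \<in> multi_idx n"
  shows "S n G a Q = S n G' a' Q"
  unfolding S_def using prodpow_cong[OF assms(1)] assms(2,3) by (intro sum.cong) (auto simp: Md_def)

lemma fcomp_cong: "fmap_eq n F F' \<Longrightarrow> fmap_eq n G G' \<Longrightarrow> fmap_eq n (fcomp n F G) (fcomp n F' G')"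
  unfolding fmap_eq_def fcomp_S using S_cong by auto

lemma S_ext:
  assumes "\<forall>m<n. ordge n 1 (G m)" "Q \<in> multi_idx n" "mdeg n Q \<le> d"
  shows "S n G a Q = (\<Sum>P\<in>Md n d. a P * ps_prodpow G P n Q)"
  unfolding S_def
proof (rule sum.mono_neutral_left[OF finite_Md])
  show "Md n (mdeg n Q) \<subseteq> Md n d" using assms(3) by (auto simp: Md_def)
  show "\<forall>P\<in>Md n d - Md n (mdeg n Q). a P * ps_prodpow G P n Q = 0"
  proof
    fix P assume "P \<in> Md n d - Md n (mdeg n Q)"
    then have "mdeg n Q < mdeg n P" by (auto simp: Md_def)
    then show "a P * ps_prodpow G P n Q = 0"
      using prodpow_ord_M[OF assms(1), of P] assms(2) by (auto simp: ordge_def)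
  qed
qed

lemma prodpow_zi: "ps_prodpow G zi N = ps_one"
  by (induction N) (auto simp: zi_def ps_mult_one good_one)

lemma zi_Md[simp]: "zi \<in> Md n d" by (simp add: Md_def)

lemma S_one: "S n H ps_one Q = ps_one Q"
proof -
  have "S n H ps_one Q = (\<Sum>P\<in>Md n (mdeg n Q). if P = zi then ps_prodpow H P n Q else 0)"
    unfolding S_def by (rule sum.cong) (auto simp: ps_one_eq)
  also have "\<dots> = ps_one Q" by (subst sum.delta[OF finite_Md]) (simp add: prodpow_zi)
  finally show ?thesis .
qed

lemma S_mult:
  assumes G: "\<forall>m<n. ordge n 1 (G m)" and Q: "Q \<in> multi_idx n"
  shows "S n G (ps_mult a b) Q = ps_mult (S n G a) (S n G b) Q"
proof -
  define d where "d = mdeg n Q"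
  define D where "D = Md n d"
  let ?g = "\<lambda>P. ps_prodpow G P n"
  define E where "E = {(R,T). R \<in> multi_idx n \<and> T \<in> multi_idx n \<and> mdeg n R + mdeg n T \<le> d}"
  have fD: "finite D" by (simp add: D_def finite_Md)
  have fbP: "\<And>P. P \<in> D \<Longrightarrow> finite (box P)"
    by (auto simp: D_def Md_def intro: finite_box multi_idx_fsupp)
  have split: "?g P = ps_mult (?g R) (?g (\<lambda>i. P i - R i))" if "R \<in> box P" for P R
  proof -
    have "?g P = ?g (\<lambda>i. R i + (P i - R i))" using box_add[OF that] by simp
    also have "\<dots> = ps_mult (?g R) (?g (\<lambda>i. P i - R i))" by (rule prodpow_add)
    finally show ?thesis .
  qed
  have "S n G (ps_mult a b) Q =
      (\<Sum>P\<in>D. \<Sum>R\<in>box P. a R * b (\<lambda>i. P i - R i) * ps_mult (?g R) (?g (\<lambda>i. P i - R i)) Q)"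
    unfolding S_def d_def[symmetric] D_def[symmetric]
  proof (rule sum.cong[OF refl])
    fix P assume "P \<in> D"
    show "ps_mult a b P * ?g P Q = (\<Sum>R\<in>box P. a R * b (\<lambda>i. P i - R i) * ps_mult (?g R) (?g (\<lambda>i. P i - R i)) Q)"
      unfolding ps_mult_box[of a b P] sum_distrib_right using split by (intro sum.cong) auto
  qed
  also have "\<dots> = (\<Sum>(P,R)\<in>Sigma D box. a R * b (\<lambda>i. P i - R i) * ps_mult (?g R) (?g (\<lambda>i. P i - R i)) Q)"
    by (rule sum.Sigma[OF fD]) (use fbP in auto)
  also have "\<dots> = (\<Sum>(R,T)\<in>E. a R * b T * ps_mult (?g R) (?g T) Q)"
  proof (rule sum.reindex_bij_witness[of _ "\<lambda>(R,T). (\<lambda>k. R k + T k, R)" "\<lambda>(P,R). (R, \<lambda>k. P k - R k)"])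
    fix x assume x: "x \<in> Sigma D box"
    obtain P R where xe: "x = (P,R)" by (cases x)
    have PD: "P \<in> D" and RP: "R \<in> box P" using x xe by auto
    have PM: "P \<in> multi_idx n" using PD by (simp add: D_def Md_def)
    show "(case case x of (P, R) \<Rightarrow> (R, \<lambda>k. P k - R k) of (R, T) \<Rightarrow> (\<lambda>k. R k + T k, R)) = x"
      using xe box_add[OF RP] by simp
    show "(case x of (P, R) \<Rightarrow> (R, \<lambda>k. P k - R k)) \<in> E"
      using xe PM PD RP box_multi_idx[OF PM RP] diff_multi_idx[OF PM] mdeg_box[OF RP, of n]
      by (auto simp: E_def D_def Md_def)
    show "(case case x of (P, R) \<Rightarrow> (R, \<lambda>k. P k - R k) of (R, T) \<Rightarrow> a R * b T * ps_mult (?g R) (?g T) Q) =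
          (case x of (P, R) \<Rightarrow> a R * b (\<lambda>i. P i - R i) * ps_mult (?g R) (?g (\<lambda>i. P i - R i)) Q)"
      using xe by simp
  next
    fix y assume y: "y \<in> E"
    obtain R T where ye: "y = (R,T)" by (cases y)
    have RM: "R \<in> multi_idx n" and TM: "T \<in> multi_idx n" and dd: "mdeg n R + mdeg n T \<le> d"
      using y ye by (auto simp: E_def)
    show "(case case y of (R, T) \<Rightarrow> (\<lambda>k. R k + T k, R) of (P, R) \<Rightarrow> (R, \<lambda>k. P k - R k)) = y"
      using ye by simp
    show "(case y of (R, T) \<Rightarrow> (\<lambda>k. R k + T k, R)) \<in> Sigma D box"
      using ye RM TM dd add_multi_idx[OF RM TM] mdeg_add[of n R T]
      by (auto simp: D_def Md_def box_def)
  qed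
  also have "\<dots> = (\<Sum>(R,T)\<in>D \<times> D. a R * b T * ps_mult (?g R) (?g T) Q)"
  proof (rule sum.mono_neutral_left)
    show "finite (D \<times> D)" using fD by simp
    show "E \<subseteq> D \<times> D" by (auto simp: E_def D_def Md_def)
    show "\<forall>i\<in>D \<times> D - E. (case i of (R, T) \<Rightarrow> a R * b T * ps_mult (?g R) (?g T) Q) = 0"
    proof
      fix x assume x: "x \<in> D \<times> D - E"
      obtain R T where xe: "x = (R,T)" by (cases x)
      have "d < mdeg n R + mdeg n T" using x xe by (auto simp: E_def D_def Md_def)
      moreover have "ordge n (mdeg n R + mdeg n T) (ps_mult (?g R) (?g T))"
        by (intro mult_ord prodpow_ord_M G)
      ultimately have "ps_mult (?g R) (?g T) Q = 0" using Q by (auto simp: ordge_def d_def)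
      then show "(case x of (R, T) \<Rightarrow> a R * b T * ps_mult (?g R) (?g T) Q) = 0" using xe by simp
    qed
  qed
  also have "\<dots> = (\<Sum>R\<in>D. \<Sum>T\<in>D. a R * b T * ps_mult (?g R) (?g T) Q)"
    by (rule sum.cartesian_product[symmetric])
  also have "\<dots> = (\<Sum>R\<in>D. \<Sum>T\<in>D. \<Sum>Q1\<in>box Q. a R * b T * (?g R Q1 * ?g T (\<lambda>i. Q i - Q1 i)))"
    unfolding ps_mult_box sum_distrib_left by simp
  also have "\<dots> = (\<Sum>Q1\<in>box Q. \<Sum>R\<in>D. \<Sum>T\<in>D. a R * b T * (?g R Q1 * ?g T (\<lambda>i. Q i - Q1 i)))"
    by (simp only: sum.swap[of _ D "box Q"])
  also have "\<dots> = (\<Sum>Q1\<in>box Q. (\<Sum>R\<in>D. a R * ?g R Q1) * (\<Sum>T\<in>D. b T * ?g T (\<lambda>i. Q i - Q1 i)))"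
    by (simp add: sum_product mult_ac)
  also have "\<dots> = ps_mult (S n G a) (S n G b) Q"
    unfolding ps_mult_box
  proof (rule sum.cong[OF refl])
    fix Q1 assume Q1: "Q1 \<in> box Q"
    have d1: "mdeg n Q1 \<le> d" "mdeg n (\<lambda>i. Q i - Q1 i) \<le> d" using mdeg_box[OF Q1, of n] by (auto simp: d_def)
    show "(\<Sum>R\<in>D. a R * ?g R Q1) * (\<Sum>T\<in>D. b T * ?g T (\<lambda>i. Q i - Q1 i)) =
          S n G a Q1 * S n G b (\<lambda>i. Q i - Q1 i)"
      using S_ext[OF G box_multi_idx[OF Q Q1] d1(1)] S_ext[OF G diff_multi_idx[OF Q] d1(2)]
      by (simp add: D_def)
  qed
  finally show ?thesis .
qed


lemma fixes_origin_iff: "fixes_origin n G \<longleftrightarrow> (\<forall>m<n. ordge n 1 (G m))"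
  using mdeg0 by (auto simp: fixes_origin_def ordge_def zi_def[symmetric])

lemma unit_idx_neq_zi'[simp]: "zi \<noteq> unit_idx j"
  using unit_idx_neq_zi by metis

lemma S_pow:
  assumes "\<forall>m<n. ordge n 1 (H m)"
  shows "\<forall>Q\<in>multi_idx n. S n H (ps_pow a k) Q = ps_pow (S n H a) k Q"
proof (induction k)
  case 0 show ?case by (simp add: S_one)
next
  case (Suc k)
  show ?case
  proof
    fix Q assume Q: "Q \<in> multi_idx n"
    have "S n H (ps_pow a (Suc k)) Q = ps_mult (S n H a) (S n H (ps_pow a k)) Q"
      by (simp add: ps_pow_Suc S_mult[OF assms Q])
    also have "\<dots> = ps_mult (S n H a) (ps_pow (S n H a) k) Q"
      by (rule ps_mult_cong[OF Q]) (use Suc in auto)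
    finally show "S n H (ps_pow a (Suc k)) Q = ps_pow (S n H a) (Suc k) Q" by (simp add: ps_pow_Suc)
  qed
qed

lemma S_prodpow:
  assumes "\<forall>m<n. ordge n 1 (H m)"
  shows "\<forall>Q\<in>multi_idx n. S n H (ps_prodpow G R N) Q = ps_prodpow (\<lambda>m. S n H (G m)) R N Q"
proof (induction N)
  case 0 show ?case by (simp add: S_one)
next
  case (Suc N)
  show ?case
  proof
    fix Q assume Q: "Q \<in> multi_idx n"
    have "S n H (ps_prodpow G R (Suc N)) Q =
       ps_mult (S n H (ps_prodpow G R N)) (S n H (ps_pow (G N) (R N))) Q"
      by (simp add: S_mult[OF assms Q])
    also have "\<dots> = ps_mult (ps_prodpow (\<lambda>m. S n H (G m)) R N) (ps_pow (S n H (G N)) (R N)) Q"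
      by (rule ps_mult_cong[OF Q]) (use Suc S_pow[OF assms] in auto)
    finally show "S n H (ps_prodpow G R (Suc N)) Q = ps_prodpow (\<lambda>m. S n H (G m)) R (Suc N) Q" by simp
  qed
qed

lemma fcomp_S': "fcomp n G H = (\<lambda>m. S n H (G m))"
  by (rule ext) (simp add: fcomp_S)

lemma fcomp_assoc:
  assumes G: "\<forall>m<n. ordge n 1 (G m)" and H: "\<forall>m<n. ordge n 1 (H m)" and Q: "Q \<in> multi_idx n"
  shows "fcomp n (fcomp n F G) H i Q = fcomp n F (fcomp n G H) i Q"
proof -
  define D where "D = Md n (mdeg n Q)"
  have "fcomp n (fcomp n F G) H i Q = S n H (S n G (F i)) Q" by (simp add: fcomp_S)
  also have "\<dots> = (\<Sum>P\<in>D. (\<Sum>R\<in>D. F i R * ps_prodpow G R n P) * ps_prodpow H P n Q)"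
    unfolding S_def[of n H] D_def[symmetric]
  proof (rule sum.cong[OF refl])
    fix P assume P: "P \<in> D"
    show "S n G (F i) P * ps_prodpow H P n Q = (\<Sum>R\<in>D. F i R * ps_prodpow G R n P) * ps_prodpow H P n Q"
      using S_ext[OF G, of P "mdeg n Q" "F i"] P by (simp add: D_def Md_def)
  qed
  also have "\<dots> = (\<Sum>R\<in>D. F i R * (\<Sum>P\<in>D. ps_prodpow G R n P * ps_prodpow H P n Q))"
    unfolding sum_distrib_right sum_distrib_left mult.assoc by (rule sum.swap)
  also have "\<dots> = (\<Sum>R\<in>D. F i R * S n H (ps_prodpow G R n) Q)" by (simp add: S_def D_def)
  also have "\<dots> = (\<Sum>R\<in>D. F i R * ps_prodpow (\<lambda>m. S n H (G m)) R n Q)"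
    using S_prodpow[OF H] Q by simp
  also have "\<dots> = fcomp n F (fcomp n G H) i Q" by (simp add: fcomp_S fcomp_S' S_def D_def)
  finally show ?thesis .
qed

lemma fcomp_zi: "fcomp n F G i zi = F i zi"
  by (simp add: fcomp_S S_def Md0 prodpow_zi ps_one_eq)

lemma fixes_origin_fcomp: "fixes_origin n F \<Longrightarrow> fixes_origin n (fcomp n F G)"
  by (simp add: fixes_origin_def fcomp_zi[unfolded zi_def])

lemma prodpow_unit:
  "\<forall>Q\<in>multi_idx n. ps_prodpow G (unit_idx m) N Q = (if m < N then G m Q else ps_one Q)"
proof (induction N)
  case 0 then show ?case by simp
next
  case (Suc N)
  show ?case
  proof
    fix Q assume Q: "Q \<in> multi_idx n"
    show "ps_prodpow G (unit_idx m) (Suc N) Q = (if m < Suc N then G m Q else ps_one Q)"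
    proof (cases "m = N")
      case True
      have "ps_prodpow G (unit_idx m) (Suc N) Q = ps_mult ps_one (ps_mult (G N) ps_one) Q"
        using Suc True by (simp add: unit_idx_def ps_pow_Suc) (rule ps_mult_cong[OF Q], auto)
      also have "\<dots> = G N Q" using Q ps_one_mult_M ps_mult_one_M ps_mult_cong
        by (metis (no_types, lifting))
      finally show ?thesis using True by simp
    next
      case False
      have "ps_prodpow G (unit_idx m) (Suc N) Q = ps_mult (ps_prodpow G (unit_idx m) N) ps_one Q"
        using False by (simp add: unit_idx_def)
      also have "\<dots> = ps_prodpow G (unit_idx m) N Q" by (rule ps_mult_one_M[OF Q])
      finally show ?thesis using Suc Q False by auto
    qed
  qed
qed

lemma prodpow_unit_n: "m < n \<Longrightarrow> Q \<in> multi_idx n \<Longrightarrow> ps_prodpow G (unit_idx m) n Q = G m Q"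
  using prodpow_unit by simp

lemma fcomp_fid_left:
  assumes "fixes_origin n G" shows "fmap_eq n (fcomp n fid G) G"
  unfolding fmap_eq_def
proof (intro allI impI ballI)
  fix i Q assume i: "i < n" and Q: "Q \<in> multi_idx n"
  have "fcomp n fid G i Q = (\<Sum>P\<in>Md n (mdeg n Q). if P = unit_idx i then ps_prodpow G P n Q else 0)"
    unfolding fcomp_S S_def by (rule sum.cong) (auto simp: fid_def)
  also have "\<dots> = (if unit_idx i \<in> Md n (mdeg n Q) then G i Q else 0)"
    by (subst sum.delta[OF finite_Md]) (simp add: prodpow_unit_n[OF i Q])
  also have "\<dots> = G i Q"
  proof (cases "mdeg n Q = 0")
    case True
    then have "Q = zi" using mdeg0 Q by blast
    then show ?thesis using assms i by (auto simp: fixes_origin_def zi_def)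
  next
    case False then show ?thesis using i by (auto simp: Md_def unit_idx_multi_idx mdeg_unit_idx)
  qed
  finally show "fcomp n fid G i Q = G i Q" .
qed

definition mono :: "(nat \<Rightarrow> nat) \<Rightarrow> fps_n" where
  "mono A Q = (if Q = A then 1 else 0)"

lemma mono_mult: assumes "fsupp Q" shows "ps_mult (mono A) (mono B) Q = mono (\<lambda>i. A i + B i) Q"
proof -
  have "ps_mult (mono A) (mono B) Q = (\<Sum>P\<in>box Q. if P = A then mono B (\<lambda>i. Q i - A i) else 0)"
    unfolding ps_mult_box by (rule sum.cong) (auto simp: mono_def)
  also have "\<dots> = (if A \<in> box Q then mono B (\<lambda>i. Q i - A i) else 0)"
    by (rule sum.delta[OF finite_box[OF assms]])
  also have "\<dots> = mono (\<lambda>i. A i + B i) Q"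
    by (auto simp: mono_def box_def fun_eq_iff) (metis le_add1 add_diff_cancel_left' le_add_diff_inverse)+
  finally show ?thesis .
qed

lemma pow_mono: "\<forall>Q\<in>multi_idx n. ps_pow (mono A) k Q = mono (\<lambda>i. k * A i) Q"
proof (induction k)
  case 0 then show ?case by (auto simp: ps_one_eq mono_def zi_def fun_eq_iff)
next
  case (Suc k)
  show ?case
  proof
    fix Q assume Q: "Q \<in> multi_idx n"
    have "ps_pow (mono A) (Suc k) Q = ps_mult (mono A) (mono (\<lambda>i. k * A i)) Q"
      unfolding ps_pow_Suc by (rule ps_mult_cong[OF Q]) (use Suc in auto)
    also have "\<dots> = mono (\<lambda>i. Suc k * A i) Q" using mono_mult[OF multi_idx_fsupp[OF Q]] by simp
    finally show "ps_pow (mono A) (Suc k) Q = mono (\<lambda>i. Suc k * A i) Q" .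
  qed
qed

lemma fid_mono: "fid m = mono (unit_idx m)"
  by (rule ext) (simp add: fid_def mono_def)

lemma prodpow_fid: "\<forall>Q\<in>multi_idx n. ps_prodpow fid P N Q = mono (\<lambda>i. if i < N then P i else 0) Q"
proof (induction N)
  case 0 then show ?case by (auto simp: ps_one_eq mono_def zi_def fun_eq_iff)
next
  case (Suc N)
  show ?case
  proof
    fix Q assume Q: "Q \<in> multi_idx n"
    have "ps_prodpow fid P (Suc N) Q =
        ps_mult (mono (\<lambda>i. if i < N then P i else 0)) (mono (\<lambda>i. P N * unit_idx N i)) Q"
      unfolding ps_prodpow.simps
      apply (rule ps_mult_cong[OF Q])
      using Suc apply blast
      using pow_mono[of n "unit_idx N"] by (simp add: fid_mono)
    also have "\<dots> = mono (\<lambda>i. (if i < N then P i else 0) + P N * unit_idx N i) Q"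
      by (rule mono_mult[OF multi_idx_fsupp[OF Q]])
    also have "(\<lambda>i. (if i < N then P i else 0) + P N * unit_idx N i) = (\<lambda>i. if i < Suc N then P i else 0)"
      by (auto simp: unit_idx_def fun_eq_iff less_Suc_eq)
    finally show "ps_prodpow fid P (Suc N) Q = mono (\<lambda>i. if i < Suc N then P i else 0) Q" .
  qed
qed

lemma fcomp_fid_right: "fmap_eq n (fcomp n F fid) F"
  unfolding fmap_eq_def
proof (intro allI impI ballI)
  fix i Q assume i: "i < n" and Q: "Q \<in> multi_idx n"
  have e: "\<And>P. P \<in> multi_idx n \<Longrightarrow> (\<lambda>j. if j < n then P j else 0) = P"
    by (auto simp: multi_idx_def fun_eq_iff)
  have "fcomp n F fid i Q = (\<Sum>P\<in>Md n (mdeg n Q). if P = Q then F i P else 0)"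
    unfolding fcomp_S S_def
    by (rule sum.cong) (use prodpow_fid Q e in \<open>auto simp: Md_def mono_def\<close>)
  also have "\<dots> = F i Q" by (subst sum.delta[OF finite_Md]) (use Q in \<open>auto simp: Md_def\<close>)
  finally show "fcomp n F fid i Q = F i Q" .
qed

definition linmap :: "nat \<Rightarrow> complex mat \<Rightarrow> fmap" where
  "linmap n T i Q = (\<Sum>m<n. if Q = unit_idx m then T $$ (i,m) else 0)"

lemma linmap_unit: "j < n \<Longrightarrow> linmap n T i (unit_idx j) = T $$ (i,j)"
  unfolding linmap_def by (simp add: unit_idx_inj)

lemma linmap_nonunit: "(\<forall>m<n. Q \<noteq> unit_idx m) \<Longrightarrow> linmap n T i Q = 0"
  unfolding linmap_def by simp

lemma fixes_origin_linmap: "fixes_origin n (linmap n T)"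
  unfolding fixes_origin_def using unit_idx_neq_zi by (auto simp: linmap_def zi_def[symmetric])

lemma fcomp_linmap_left:
  assumes G: "fixes_origin n G" and Q: "Q \<in> multi_idx n"
  shows "fcomp n (linmap n T) G i Q = (\<Sum>m<n. T $$ (i,m) * G m Q)"
proof -
  have "fcomp n (linmap n T) G i Q =
      (\<Sum>P\<in>Md n (mdeg n Q). \<Sum>m<n. if P = unit_idx m then T$$(i,m) * ps_prodpow G P n Q else 0)"
    unfolding fcomp_S S_def linmap_def sum_distrib_right by (intro sum.cong) auto
  also have "\<dots> = (\<Sum>m<n. \<Sum>P\<in>Md n (mdeg n Q). if P = unit_idx m then T$$(i,m) * ps_prodpow G P n Q else 0)"
    by (rule sum.swap)
  also have "\<dots> = (\<Sum>m<n. if unit_idx m \<in> Md n (mdeg n Q) then T$$(i,m) * G m Q else 0)"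
    by (intro sum.cong refl, subst sum.delta[OF finite_Md]) (simp add: prodpow_unit_n Q)
  also have "\<dots> = (\<Sum>m<n. T $$ (i,m) * G m Q)"
  proof (cases "mdeg n Q = 0")
    case True
    then have "Q = zi" using mdeg0 Q by blast
    then have "\<forall>m<n. G m Q = 0" using G by (simp add: fixes_origin_def zi_def)
    then show ?thesis by (intro sum.cong refl) auto
  next
    case False then show ?thesis
      by (intro sum.cong refl) (auto simp: Md_def unit_idx_multi_idx mdeg_unit_idx)
  qed
  finally show ?thesis .
qed

lemma lin_part_linmap: "T \<in> carrier_mat n n \<Longrightarrow> lin_part n (linmap n T) = T"
  by (rule eq_matI) (auto simp: lin_part_def linmap_unit)

lemma Md1: "Md n 1 = insert zi (unit_idx ` {..<n})"
proof
  show "Md n 1 \<subseteq> insert zi (unit_idx ` {..<n})"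
  proof
    fix P assume P: "P \<in> Md n 1"
    then have PM: "P \<in> multi_idx n" and d: "mdeg n P \<le> 1" by (auto simp: Md_def)
    show "P \<in> insert zi (unit_idx ` {..<n})"
    proof (cases "mdeg n P = 0")
      case True then show ?thesis using mdeg0 PM by blast
    next
      case False then have "mdeg n P = 1" using d by simp
      then show ?thesis using mdeg1 PM by blast
    qed
  qed
  show "insert zi (unit_idx ` {..<n}) \<subseteq> Md n 1"
    by (auto simp: Md_def unit_idx_multi_idx mdeg_unit_idx)
qed

lemma fcomp_unit:
  assumes G: "fixes_origin n G" and j: "j < n"
  shows "fcomp n F G i (unit_idx j) = (\<Sum>m<n. F i (unit_idx m) * G m (unit_idx j))"
proof -
  have nz: "zi \<notin> unit_idx ` {..<n}" using unit_idx_neq_zi by (metis imageE)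
  have inj: "inj_on unit_idx {..<n}" by (auto simp: inj_on_def unit_idx_inj)
  have "fcomp n F G i (unit_idx j) = (\<Sum>P\<in>insert zi (unit_idx ` {..<n}). F i P * ps_prodpow G P n (unit_idx j))"
    unfolding fcomp_S S_def mdeg_unit_idx[OF j] Md1 ..
  also have "\<dots> = (\<Sum>P\<in>unit_idx ` {..<n}. F i P * ps_prodpow G P n (unit_idx j))"
    using nz by (simp add: prodpow_zi ps_one_eq)
  also have "\<dots> = (\<Sum>m<n. F i (unit_idx m) * G m (unit_idx j))"
    by (subst sum.reindex[OF inj]) (simp add: prodpow_unit_n unit_idx_multi_idx j)
  finally show ?thesis .
qed

lemma lin_part_fcomp:
  assumes "fixes_origin n G" shows "lin_part n (fcomp n F G) = lin_part n F * lin_part n G"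
  by (rule eq_matI) (auto simp: lin_part_def fcomp_unit[OF assms] scalar_prod_def atLeast0LessThan)

lemma lin_part_cong: "fmap_eq n F F' \<Longrightarrow> lin_part n F = lin_part n F'"
  by (rule eq_matI) (auto simp: lin_part_def fmap_eq_def unit_idx_multi_idx)

lemma linmap_comp:
  assumes T: "T \<in> carrier_mat n n" and U: "U \<in> carrier_mat n n"
  shows "fmap_eq n (fcomp n (linmap n T) (linmap n U)) (linmap n (T * U))"
  unfolding fmap_eq_def
proof (intro allI impI ballI)
  fix i Q assume i: "i < n" and Q: "Q \<in> multi_idx n"
  have TU: "(T * U) $$ (i,l) = (\<Sum>m<n. T $$ (i,m) * U $$ (m,l))" if "l < n" for l
    using T U i that by (simp add: scalar_prod_def atLeast0LessThan)
  have "fcomp n (linmap n T) (linmap n U) i Q = (\<Sum>m<n. T $$ (i,m) * linmap n U m Q)"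
    by (rule fcomp_linmap_left[OF fixes_origin_linmap Q])
  also have "\<dots> = (\<Sum>m<n. \<Sum>l<n. if Q = unit_idx l then T $$ (i,m) * U $$ (m,l) else 0)"
    unfolding linmap_def sum_distrib_left by (intro sum.cong) auto
  also have "\<dots> = (\<Sum>l<n. \<Sum>m<n. if Q = unit_idx l then T $$ (i,m) * U $$ (m,l) else 0)"
    by (rule sum.swap)
  also have "\<dots> = linmap n (T * U) i Q"
    unfolding linmap_def by (intro sum.cong refl) (auto simp: TU)
  finally show "fcomp n (linmap n T) (linmap n U) i Q = linmap n (T * U) i Q" .
qed

lemma linmap_one: "fmap_eq n (linmap n (1\<^sub>m n)) fid"
  unfolding fmap_eq_def
proof (intro allI impI ballI)
  fix i Q assume i: "i < n" and Q: "Q \<in> multi_idx n"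
  have "linmap n (1\<^sub>m n) i Q = (\<Sum>m<n. if m = i then (if Q = unit_idx m then 1 else 0) else 0)"
    unfolding linmap_def using i by (intro sum.cong) auto
  also have "\<dots> = fid i Q" using i by (simp add: fid_def)
  finally show "linmap n (1\<^sub>m n) i Q = fid i Q" .
qed

lemma S_add: "S n G (\<lambda>R. a R + b R) Q = S n G a Q + S n G b Q"
  unfolding S_def by (simp add: distrib_right sum.distrib)

lemma S_diff: "S n G (\<lambda>R. a R - b R) Q = S n G a Q - S n G b Q"
  unfolding S_def by (simp add: left_diff_distrib sum_subtractf)

lemma perturb:
  assumes u: "\<forall>m<n. ordge n 1 (u m)" and r: "\<forall>m<n. ordge n d (r m)" and d: "2 \<le> d"
    and Q: "Q \<in> multi_idx n" and dQ: "mdeg n Q \<le> d"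
  shows "S n (\<lambda>m R. u m R + r m R) a Q - S n u a Q = (\<Sum>m<n. a (unit_idx m) * r m Q)"
proof -
  define v where "v = (\<lambda>m R. u m R + r m R)"
  define D where "D = Md n (mdeg n Q)"
  have vord: "\<forall>m<n. ordge n 1 (v m)"
    using u r d by (auto simp: v_def ordge_def)
  have ag: "\<forall>m<n. ordge n 1 (v m) \<and> ordge n 1 (u m) \<and> agree n (d - 1) (v m) (u m)"
    using vord u r d by (auto simp: v_def agree_def ordge_def)
  have claim: "ps_prodpow v P n Q - ps_prodpow u P n Q = (\<Sum>m<n. if P = unit_idx m then r m Q else 0)"
    if P: "P \<in> D" for P
  proof -
    have PM: "P \<in> multi_idx n" using P by (simp add: D_def Md_def)
    consider "mdeg n P = 0" | "mdeg n P = 1" | "2 \<le> mdeg n P" by linarith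
    then show ?thesis
    proof cases
      case 1 then have "P = zi" using mdeg0 PM by blast
      then show ?thesis by (simp add: prodpow_zi)
    next
      case 2 then obtain k where k: "k < n" "P = unit_idx k" using mdeg1 PM by blast
      then show ?thesis using Q by (simp add: prodpow_unit_n v_def unit_idx_inj)
    next
      case 3
      have "agree n (d - 1 - 1 + (\<Sum>m<n. P m)) (ps_prodpow v P n) (ps_prodpow u P n)"
        by (rule prodpow_agree) (use ag d in auto)
      moreover have "mdeg n Q \<le> d - 1 - 1 + (\<Sum>m<n. P m)" using 3 dQ d by (simp add: mdeg_def)
      ultimately have "ps_prodpow v P n Q = ps_prodpow u P n Q" using Q by (simp add: agree_def)
      moreover have "\<forall>m<n. P \<noteq> unit_idx m" using 3 mdeg_unit_idx by fastforce
      ultimately show ?thesis by simp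
    qed
  qed
  have "S n v a Q - S n u a Q = (\<Sum>P\<in>D. a P * (ps_prodpow v P n Q - ps_prodpow u P n Q))"
    unfolding S_def D_def by (simp add: right_diff_distrib sum_subtractf)
  also have "\<dots> = (\<Sum>P\<in>D. \<Sum>m<n. if P = unit_idx m then a P * r m Q else 0)"
    using claim by (simp add: sum_distrib_left if_distrib cong: if_cong)
  also have "\<dots> = (\<Sum>m<n. \<Sum>P\<in>D. if P = unit_idx m then a P * r m Q else 0)" by (rule sum.swap)
  also have "\<dots> = (\<Sum>m<n. if unit_idx m \<in> D then a (unit_idx m) * r m Q else 0)"
    by (simp add: D_def sum.delta[OF finite_Md])
  also have "\<dots> = (\<Sum>m<n. a (unit_idx m) * r m Q)"
  proof (cases "mdeg n Q = 0")
    case True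
    then have "Q = zi" using mdeg0 Q by blast
    then have "\<forall>m<n. r m Q = 0" using r d by (auto simp: ordge_def)
    then show ?thesis by (intro sum.cong refl) auto
  next
    case False then show ?thesis
      by (intro sum.cong refl) (auto simp: D_def Md_def unit_idx_multi_idx mdeg_unit_idx)
  qed
  finally show ?thesis by (simp add: v_def)
qed


definition wt :: "nat \<Rightarrow> (nat \<Rightarrow> nat) \<Rightarrow> nat" where
  "wt n Q = (\<Sum>i<n. i * Q i)"

definition keyp :: "nat \<Rightarrow> nat \<times> (nat \<Rightarrow> nat) \<Rightarrow> nat \<times> nat \<times> nat" where
  "keyp n x = (mdeg n (snd x), n * mdeg n (snd x) - wt n (snd x), fst x)"

definition Rel :: "nat \<Rightarrow> ((nat \<times> (nat \<Rightarrow> nat)) \<times> (nat \<times> (nat \<Rightarrow> nat))) set" where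
  "Rel n = inv_image (less_than <*lex*> less_than <*lex*> less_than) (keyp n)"

lemma wf_Rel: "wf (Rel n)"
  unfolding Rel_def by (intro wf_inv_image wf_lex_prod wf_less_than)

lemma Rel_iff: "((j',Q'),(j,Q)) \<in> Rel n \<longleftrightarrow>
   mdeg n Q' < mdeg n Q \<or> (mdeg n Q' = mdeg n Q \<and>
     (n * mdeg n Q' - wt n Q' < n * mdeg n Q - wt n Q \<or>
      (n * mdeg n Q' - wt n Q' = n * mdeg n Q - wt n Q \<and> j' < j)))"
  by (auto simp: Rel_def keyp_def)

lemma wt_le: "wt n Q \<le> n * mdeg n Q"
  unfolding wt_def mdeg_def sum_distrib_left by (rule sum_mono) auto

lemma wt_add: "wt n (\<lambda>i. P i + R i) = wt n P + wt n R"
  by (simp add: wt_def sum.distrib distrib_left)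

lemma wt_box: "P \<in> box Q \<Longrightarrow> wt n Q = wt n P + wt n (\<lambda>i. Q i - P i)"
  unfolding wt_def
  by (subst sum.distrib[symmetric]) (auto simp: box_def diff_mult_distrib2 intro!: sum.cong)

lemma wt_unit: assumes "m < n" shows "wt n (unit_idx m) = m"
proof -
  have "wt n (unit_idx m) = (\<Sum>i<n. if i = m then m else 0)"
    unfolding wt_def unit_idx_def by (rule sum.cong) auto
  then show ?thesis using assms by simp
qed

definition tri :: "nat \<Rightarrow> fps_n \<Rightarrow> (nat \<Rightarrow> nat) \<Rightarrow> complex \<Rightarrow> bool" where
  "tri n a P c \<longleftrightarrow> (\<forall>Q\<in>multi_idx n. a Q \<noteq> 0 \<longrightarrow> mdeg n Q = mdeg n P \<and> (wt n Q < wt n P \<or> Q = P)) \<and> a P = c"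

lemma tri_one: "tri n ps_one zi 1"
  by (auto simp: tri_def ps_one_eq)

lemma tri_mult:
  assumes P1: "P1 \<in> multi_idx n" and P2: "P2 \<in> multi_idx n"
    and a: "tri n a P1 c1" and b: "tri n b P2 c2"
  shows "tri n (ps_mult a b) (\<lambda>i. P1 i + P2 i) (c1 * c2)"
proof -
  let ?P = "\<lambda>i. P1 i + P2 i"
  have key: "mdeg n Q = mdeg n ?P \<and> (wt n Q < wt n ?P \<or> (R = P1 \<and> (\<lambda>i. Q i - R i) = P2))"
    if Q: "Q \<in> multi_idx n" and R: "R \<in> box Q" and aR: "a R \<noteq> 0" and bR: "b (\<lambda>i. Q i - R i) \<noteq> 0" for Q R
  proof -
    have RM: "R \<in> multi_idx n" using box_multi_idx[OF Q R] .
    have QRM: "(\<lambda>i. Q i - R i) \<in> multi_idx n" using diff_multi_idx[OF Q] .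
    have h1: "mdeg n R = mdeg n P1 \<and> (wt n R < wt n P1 \<or> R = P1)" using a aR RM by (auto simp: tri_def)
    have h2: "mdeg n (\<lambda>i. Q i - R i) = mdeg n P2 \<and> (wt n (\<lambda>i. Q i - R i) < wt n P2 \<or> (\<lambda>i. Q i - R i) = P2)"
      using b bR QRM by (auto simp: tri_def)
    have "mdeg n Q = mdeg n ?P" using h1 h2 mdeg_box[OF R, of n] mdeg_add[of n P1 P2] by simp
    moreover have "wt n Q < wt n ?P \<or> (R = P1 \<and> (\<lambda>i. Q i - R i) = P2)"
      using h1 h2 wt_box[OF R, of n] wt_add[of n P1 P2] by auto
    ultimately show ?thesis by blast
  qed
  have part1: "\<forall>Q\<in>multi_idx n. ps_mult a b Q \<noteq> 0 \<longrightarrow> mdeg n Q = mdeg n ?P \<and> (wt n Q < wt n ?P \<or> Q = ?P)"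
  proof (intro ballI impI)
    fix Q assume Q: "Q \<in> multi_idx n" and nz: "ps_mult a b Q \<noteq> 0"
    then obtain R where R: "R \<in> box Q" and t: "a R * b (\<lambda>i. Q i - R i) \<noteq> 0"
      unfolding ps_mult_box by (meson sum.neutral)
    then have "mdeg n Q = mdeg n ?P \<and> (wt n Q < wt n ?P \<or> (R = P1 \<and> (\<lambda>i. Q i - R i) = P2))"
      using key Q by auto
    moreover have "R = P1 \<and> (\<lambda>i. Q i - R i) = P2 \<Longrightarrow> Q = ?P"
      using box_add[OF R] by auto
    ultimately show "mdeg n Q = mdeg n ?P \<and> (wt n Q < wt n ?P \<or> Q = ?P)" by blast
  qed
  have PM: "?P \<in> multi_idx n" using add_multi_idx[OF P1 P2] .
  have P1box: "P1 \<in> box ?P" by (simp add: box_def)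
  have "ps_mult a b ?P = (\<Sum>R\<in>box ?P. if R = P1 then a R * b (\<lambda>i. ?P i - R i) else 0)"
    unfolding ps_mult_box
  proof (rule sum.cong[OF refl])
    fix R assume R: "R \<in> box ?P"
    show "a R * b (\<lambda>i. ?P i - R i) = (if R = P1 then a R * b (\<lambda>i. ?P i - R i) else 0)"
    proof (cases "R = P1")
      case False
      show ?thesis
      proof (rule ccontr)
        assume "\<not> ?thesis"
        then have "a R \<noteq> 0" "b (\<lambda>i. ?P i - R i) \<noteq> 0" using False by auto
        then have "wt n ?P < wt n ?P" using key[OF PM R] False by auto
        then show False by simp
      qed
    qed simp
  qed
  also have "\<dots> = a P1 * b P2"
    by (subst sum.delta[OF finite_box[OF multi_idx_fsupp[OF PM]]]) (simp add: P1box)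
  finally show ?thesis using part1 a b by (simp add: tri_def)
qed

lemma tri_pow:
  assumes P: "P \<in> multi_idx n" and a: "tri n a P c"
  shows "tri n (ps_pow a k) (\<lambda>i. k * P i) (c ^ k)"
proof (induction k)
  case 0 show ?case using tri_one by (simp add: zi_def)
next
  case (Suc k)
  have kP: "(\<lambda>i. k * P i) \<in> multi_idx n" using P by (auto simp: multi_idx_def)
  have "tri n (ps_mult a (ps_pow a k)) (\<lambda>i. P i + k * P i) (c * c ^ k)"
    by (rule tri_mult[OF P kP a Suc])
  then show ?case by (simp add: ps_pow_Suc)
qed

definition lower :: "nat \<Rightarrow> complex mat \<Rightarrow> bool" where
  "lower n T \<longleftrightarrow> (\<forall>i<n. \<forall>m<n. i < m \<longrightarrow> T $$ (i,m) = 0)"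

lemma tri_linmap:
  assumes T: "lower n T" and m: "m < n"
  shows "tri n (linmap n T m) (unit_idx m) (T $$ (m,m))"
  unfolding tri_def
proof (rule conjI, intro ballI impI)
  fix Q assume Q: "Q \<in> multi_idx n" and nz: "linmap n T m Q \<noteq> 0"
  then obtain l where l: "l < n" "Q = unit_idx l" using linmap_nonunit by blast
  then have "T $$ (m,l) \<noteq> 0" using nz by (simp add: linmap_unit)
  then have "l \<le> m" using T l m by (auto simp: lower_def not_le[symmetric])
  then show "mdeg n Q = mdeg n (unit_idx m) \<and> (wt n Q < wt n (unit_idx m) \<or> Q = unit_idx m)"
    using l m by (auto simp: mdeg_unit_idx wt_unit)
next
  show "linmap n T m (unit_idx m) = T $$ (m,m)" using m by (simp add: linmap_unit)
qed

lemma tri_prodpow: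
  assumes T: "lower n T" and P: "P \<in> multi_idx n"
  shows "N \<le> n \<Longrightarrow> tri n (ps_prodpow (linmap n T) P N) (\<lambda>i. if i < N then P i else 0) (\<Prod>i<N. T $$ (i,i) ^ P i)"
proof (induction N)
  case 0 then show ?case using tri_one by (simp add: zi_def)
next
  case (Suc N)
  have NP: "(\<lambda>i. if i < N then P i else 0) \<in> multi_idx n" using Suc.prems by (auto simp: multi_idx_def)
  have uN: "(\<lambda>i. P N * unit_idx N i) \<in> multi_idx n" using Suc.prems by (auto simp: multi_idx_def unit_idx_def)
  have t2: "tri n (ps_pow (linmap n T N) (P N)) (\<lambda>i. P N * unit_idx N i) (T $$ (N,N) ^ P N)"
    using tri_pow[OF unit_idx_multi_idx tri_linmap[OF T]] Suc.prems by simp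
  have "tri n (ps_mult (ps_prodpow (linmap n T) P N) (ps_pow (linmap n T N) (P N)))
          (\<lambda>i. (if i < N then P i else 0) + P N * unit_idx N i) ((\<Prod>i<N. T $$ (i,i) ^ P i) * T $$ (N,N) ^ P N)"
    by (rule tri_mult[OF NP uN _ t2]) (use Suc in auto)
  moreover have "(\<lambda>i. (if i < N then P i else 0) + P N * unit_idx N i) = (\<lambda>i. if i < Suc N then P i else 0)"
    by (auto simp: unit_idx_def fun_eq_iff less_Suc_eq)
  ultimately show ?case by simp
qed

lemma tri_prodpow_n:
  assumes T: "lower n T" and P: "P \<in> multi_idx n"
  shows "tri n (ps_prodpow (linmap n T) P n) P (\<Prod>i<n. T $$ (i,i) ^ P i)"
proof -
  have "(\<lambda>i. if i < n then P i else 0) = P" using P by (auto simp: multi_idx_def fun_eq_iff)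
  then show ?thesis using tri_prodpow[OF T P, of n] by simp
qed

definition Dg :: "nat \<Rightarrow> complex mat \<Rightarrow> nat \<Rightarrow> (nat \<Rightarrow> nat) \<Rightarrow> complex" where
  "Dg n T j Q = T $$ (j,j) - (\<Prod>i<n. T $$ (i,i) ^ Q i)"

lemma homol:
  assumes T: "lower n T" and j: "j < n" and Q: "Q \<in> multi_idx n"
    and z: "\<forall>j'<n. \<forall>Q'\<in>multi_idx n. ((j',Q'),(j,Q)) \<in> Rel n \<longrightarrow> \<delta> j' Q' = 0"
  shows "(\<Sum>m<n. T $$ (j,m) * \<delta> m Q) - fcomp n \<delta> (linmap n T) j Q = Dg n T j Q * \<delta> j Q"
proof -
  have p1: "(\<Sum>m<n. T $$ (j,m) * \<delta> m Q) = (\<Sum>m<n. if m = j then T $$ (j,m) * \<delta> m Q else 0)"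
  proof (rule sum.cong[OF refl])
    fix m assume m: "m \<in> {..<n}"
    show "T $$ (j,m) * \<delta> m Q = (if m = j then T $$ (j,m) * \<delta> m Q else 0)"
    proof (cases "m < j")
      case True
      then have "((m,Q),(j,Q)) \<in> Rel n" by (simp add: Rel_iff)
      then show ?thesis using z m Q by auto
    next
      case False
      then show ?thesis using T j m by (auto simp: lower_def)
    qed
  qed
  have p2: "fcomp n \<delta> (linmap n T) j Q =
      (\<Sum>P\<in>Md n (mdeg n Q). if P = Q then \<delta> j P * ps_prodpow (linmap n T) P n Q else 0)"
    unfolding fcomp_S S_def
  proof (rule sum.cong[OF refl])
    fix P assume P: "P \<in> Md n (mdeg n Q)"
    have PM: "P \<in> multi_idx n" using P by (simp add: Md_def)
    show "\<delta> j P * ps_prodpow (linmap n T) P n Q = (if P = Q then \<delta> j P * ps_prodpow (linmap n T) P n Q else 0)"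
    proof (cases "P = Q")
      case False
      show ?thesis
      proof (rule ccontr)
        assume "\<not> ?thesis"
        then have d: "\<delta> j P \<noteq> 0" and g: "ps_prodpow (linmap n T) P n Q \<noteq> 0" using False by auto
        have "mdeg n Q = mdeg n P \<and> (wt n Q < wt n P \<or> Q = P)"
          using tri_prodpow_n[OF T PM] g Q by (auto simp: tri_def)
        then have "wt n Q < wt n P" "mdeg n Q = mdeg n P" using False by auto
        then have "((j,P),(j,Q)) \<in> Rel n" using wt_le[of n P] wt_le[of n Q] by (auto simp: Rel_iff)
        then show False using z j PM d by auto
      qed
    qed simp
  qed
  have "Q \<in> Md n (mdeg n Q)" using Q by (simp add: Md_def)
  then have p2': "fcomp n \<delta> (linmap n T) j Q = \<delta> j Q * (\<Prod>i<n. T $$ (i,i) ^ Q i)"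
    unfolding p2 using tri_prodpow_n[OF T Q] by (simp add: sum.delta[OF finite_Md] tri_def)
  show ?thesis unfolding p1 p2' using j by (simp add: Dg_def algebra_simps)
qed


lemma fmap_eq_refl[simp]: "fmap_eq n F F" by (simp add: fmap_eq_def)
lemma fmap_eq_sym: "fmap_eq n F G \<Longrightarrow> fmap_eq n G F" by (simp add: fmap_eq_def)
lemma fmap_eq_trans[trans]: "fmap_eq n F G \<Longrightarrow> fmap_eq n G H \<Longrightarrow> fmap_eq n F H"
  by (simp add: fmap_eq_def)

lemma fcomp_assoc_eq:
  "fixes_origin n G \<Longrightarrow> fixes_origin n H \<Longrightarrow>
   fmap_eq n (fcomp n (fcomp n F G) H) (fcomp n F (fcomp n G H))"
  unfolding fmap_eq_def fixes_origin_iff by (intro allI impI ballI fcomp_assoc) auto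

lemma fcomp_cong1: "fmap_eq n F F' \<Longrightarrow> fmap_eq n (fcomp n F G) (fcomp n F' G)"
  by (rule fcomp_cong) simp_all
lemma fcomp_cong2: "fmap_eq n G G' \<Longrightarrow> fmap_eq n (fcomp n F G) (fcomp n F G')"
  by (rule fcomp_cong) simp_all

definition recF :: "nat \<Rightarrow> (fmap \<Rightarrow> nat \<Rightarrow> (nat \<Rightarrow> nat) \<Rightarrow> complex) \<Rightarrow> (nat \<Rightarrow> (nat \<Rightarrow> nat) \<Rightarrow> complex)
   \<Rightarrow> ((nat \<times> (nat \<Rightarrow> nat)) \<Rightarrow> complex) \<Rightarrow> (nat \<times> (nat \<Rightarrow> nat)) \<Rightarrow> complex" where
  "recF n E Dv g x =
    (if mdeg n (snd x) \<le> 1 then fid (fst x) (snd x)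
     else if Dv (fst x) (snd x) = 0 then 0
     else - E (\<lambda>j' Q'. if ((j',Q'), x) \<in> Rel n then g (j',Q') else 0) (fst x) (snd x) / Dv (fst x) (snd x))"

lemma rec_construct:
  fixes E :: "fmap \<Rightarrow> nat \<Rightarrow> (nat \<Rightarrow> nat) \<Rightarrow> complex" and Dv :: "nat \<Rightarrow> (nat \<Rightarrow> nat) \<Rightarrow> complex"
  assumes loc: "\<And>\<phi> \<phi>' j Q. j < n \<Longrightarrow> Q \<in> multi_idx n \<Longrightarrow> 2 \<le> mdeg n Q \<Longrightarrow>
      fixes_origin n \<phi> \<Longrightarrow> fixes_origin n \<phi>' \<Longrightarrow>
      (\<forall>j'<n. \<forall>Q'\<in>multi_idx n. ((j',Q'),(j,Q)) \<in> Rel n \<longrightarrow> \<phi> j' Q' = \<phi>' j' Q') \<Longrightarrow>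
      E \<phi> j Q - E \<phi>' j Q = Dv j Q * (\<phi> j Q - \<phi>' j Q)"
  shows "\<exists>\<phi>. fixes_origin n \<phi> \<and> (\<forall>j<n. \<forall>Q\<in>multi_idx n. mdeg n Q = 1 \<longrightarrow> \<phi> j Q = fid j Q) \<and>
     (\<forall>j<n. \<forall>Q\<in>multi_idx n. 2 \<le> mdeg n Q \<longrightarrow> Dv j Q \<noteq> 0 \<longrightarrow> E \<phi> j Q = 0)"
proof -
  define \<phi> where "\<phi> = (\<lambda>j Q. wfrec (Rel n) (recF n E Dv) (j,Q))"
  define \<phi>0 where "\<phi>0 = (\<lambda>j Q j' Q'. if ((j',Q'),(j,Q)) \<in> Rel n then \<phi> j' Q' else 0)"
  have unf: "\<phi> j Q = (if mdeg n Q \<le> 1 then fid j Q else if Dv j Q = 0 then 0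
        else - E (\<phi>0 j Q) j Q / Dv j Q)" for j Q
  proof -
    have "\<phi> j Q = recF n E Dv (cut (wfrec (Rel n) (recF n E Dv)) (Rel n) (j,Q)) (j,Q)"
      unfolding \<phi>_def by (rule wfrec[OF wf_Rel])
    also have "\<dots> = (if mdeg n Q \<le> 1 then fid j Q else if Dv j Q = 0 then 0
        else - E (\<phi>0 j Q) j Q / Dv j Q)"
    proof -
      have "(\<lambda>j' Q'. if ((j',Q'), (j,Q)) \<in> Rel n then cut (wfrec (Rel n) (recF n E Dv)) (Rel n) (j,Q) (j',Q') else 0)
          = \<phi>0 j Q"
        by (auto simp: \<phi>0_def \<phi>_def cut_def fun_eq_iff)
      then show ?thesis by (simp add: recF_def)
    qed
    finally show ?thesis .
  qed
  have fo: "fixes_origin n \<phi>"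
    unfolding fixes_origin_def using unf by (simp add: fid_def zi_def[symmetric])
  have deg1: "\<forall>j<n. \<forall>Q\<in>multi_idx n. mdeg n Q = 1 \<longrightarrow> \<phi> j Q = fid j Q" using unf by simp
  have sol: "\<forall>j<n. \<forall>Q\<in>multi_idx n. 2 \<le> mdeg n Q \<longrightarrow> Dv j Q \<noteq> 0 \<longrightarrow> E \<phi> j Q = 0"
  proof (intro allI impI ballI)
    fix j Q assume j: "j < n" and Q: "Q \<in> multi_idx n" and d: "2 \<le> mdeg n Q" and Dn: "Dv j Q \<noteq> 0"
    have fo0: "fixes_origin n (\<phi>0 j Q)"
      using fo d unfolding fixes_origin_def \<phi>0_def zi_def[symmetric] by (simp add: Rel_iff)
    have agr: "\<forall>j'<n. \<forall>Q'\<in>multi_idx n. ((j',Q'),(j,Q)) \<in> Rel n \<longrightarrow> \<phi> j' Q' = \<phi>0 j Q j' Q'"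
      by (simp add: \<phi>0_def)
    have z: "\<phi>0 j Q j Q = 0" by (simp add: \<phi>0_def Rel_iff)
    have "E \<phi> j Q - E (\<phi>0 j Q) j Q = Dv j Q * (\<phi> j Q - \<phi>0 j Q j Q)"
      by (rule loc[OF j Q d fo fo0 agr])
    also have "\<dots> = - E (\<phi>0 j Q) j Q" using unf[of j Q] d Dn z by simp
    finally show "E \<phi> j Q = 0" by simp
  qed
  show ?thesis using fo deg1 sol by blast
qed

lemma conj_mult:
  assumes a: "fixes_origin n a" and b: "fixes_origin n b" and p: "fixes_origin n \<phi>" and q: "fixes_origin n \<psi>"
    and inv: "fmap_eq n (fcomp n \<phi> \<psi>) fid"
  shows "fmap_eq n (fcomp n \<psi> (fcomp n (fcomp n a b) \<phi>))
                   (fcomp n (fcomp n \<psi> (fcomp n a \<phi>)) (fcomp n \<psi> (fcomp n b \<phi>)))"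
proof -
  have bp: "fixes_origin n (fcomp n b \<phi>)" using b by (rule fixes_origin_fcomp)
  have qbp: "fixes_origin n (fcomp n \<psi> (fcomp n b \<phi>))" using q by (rule fixes_origin_fcomp)
  have "fmap_eq n (fcomp n \<psi> (fcomp n (fcomp n a b) \<phi>)) (fcomp n \<psi> (fcomp n a (fcomp n b \<phi>)))"
    by (rule fcomp_cong2, rule fcomp_assoc_eq[OF b p])
  also have "fmap_eq n \<dots> (fcomp n \<psi> (fcomp n a (fcomp n fid (fcomp n b \<phi>))))"
    by (rule fcomp_cong2, rule fcomp_cong2, rule fmap_eq_sym, rule fcomp_fid_left[OF bp])
  also have "fmap_eq n \<dots> (fcomp n \<psi> (fcomp n a (fcomp n (fcomp n \<phi> \<psi>) (fcomp n b \<phi>))))"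
    by (rule fcomp_cong2, rule fcomp_cong2, rule fcomp_cong1, rule fmap_eq_sym, rule inv)
  also have "fmap_eq n \<dots> (fcomp n \<psi> (fcomp n a (fcomp n \<phi> (fcomp n \<psi> (fcomp n b \<phi>)))))"
    by (rule fcomp_cong2, rule fcomp_cong2, rule fcomp_assoc_eq[OF q bp])
  also have "fmap_eq n \<dots> (fcomp n \<psi> (fcomp n (fcomp n a \<phi>) (fcomp n \<psi> (fcomp n b \<phi>))))"
    by (rule fcomp_cong2, rule fmap_eq_sym, rule fcomp_assoc_eq[OF p qbp])
  also have "fmap_eq n \<dots> (fcomp n (fcomp n \<psi> (fcomp n a \<phi>)) (fcomp n \<psi> (fcomp n b \<phi>)))"
    by (rule fmap_eq_sym, rule fcomp_assoc_eq[OF fixes_origin_fcomp[OF a] qbp])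
  finally show ?thesis .
qed

lemma right_inverse_exists:
  assumes fo: "fixes_origin n \<phi>" and lin: "\<forall>j<n. \<forall>Q\<in>multi_idx n. mdeg n Q = 1 \<longrightarrow> \<phi> j Q = fid j Q"
  shows "\<exists>\<psi>. fixes_origin n \<psi> \<and> (\<forall>j<n. \<forall>Q\<in>multi_idx n. mdeg n Q = 1 \<longrightarrow> \<psi> j Q = fid j Q) \<and>
             fmap_eq n (fcomp n \<phi> \<psi>) fid"
proof -
  define E where "E = (\<lambda>\<psi> j Q. fcomp n \<phi> \<psi> j Q - fid j Q)"
  have phi_unit: "\<phi> j (unit_idx m) = (if m = j then 1 else 0)" if "j < n" "m < n" for j m
    using lin that unit_idx_multi_idx mdeg_unit_idx by (auto simp: fid_def unit_idx_inj)
  have loc: "E \<psi> j Q - E \<psi>' j Q = 1 * (\<psi> j Q - \<psi>' j Q)"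
    if j: "j < n" and Q: "Q \<in> multi_idx n" and d: "2 \<le> mdeg n Q" and f1: "fixes_origin n \<psi>"
      and f2: "fixes_origin n \<psi>'"
      and ag: "\<forall>j'<n. \<forall>Q'\<in>multi_idx n. ((j',Q'),(j,Q)) \<in> Rel n \<longrightarrow> \<psi> j' Q' = \<psi>' j' Q'" for \<psi> \<psi>' j Q
  proof -
    define r where "r = (\<lambda>m R. \<psi> m R - \<psi>' m R)"
    have e: "\<psi> = (\<lambda>m R. \<psi>' m R + r m R)" by (simp add: r_def)
    have rord: "\<forall>m<n. ordge n (mdeg n Q) (r m)"
      using ag by (auto simp: ordge_def r_def Rel_iff)
    have "E \<psi> j Q - E \<psi>' j Q = S n (\<lambda>m R. \<psi>' m R + r m R) (\<phi> j) Q - S n \<psi>' (\<phi> j) Q"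
      unfolding E_def fcomp_S by (simp add: e[symmetric])
    also have "\<dots> = (\<Sum>m<n. \<phi> j (unit_idx m) * r m Q)"
      by (rule perturb) (use f2 rord d Q in \<open>auto simp: fixes_origin_iff\<close>)
    also have "\<dots> = (\<Sum>m<n. if m = j then r m Q else 0)"
      by (rule sum.cong) (auto simp: phi_unit j)
    also have "\<dots> = r j Q" using j by simp
    finally show ?thesis by (simp add: r_def)
  qed
  obtain \<psi> where fo\<psi>: "fixes_origin n \<psi>" and lin\<psi>: "\<forall>j<n. \<forall>Q\<in>multi_idx n. mdeg n Q = 1 \<longrightarrow> \<psi> j Q = fid j Q"
    and sol: "\<forall>j<n. \<forall>Q\<in>multi_idx n. 2 \<le> mdeg n Q \<longrightarrow> (1::complex) \<noteq> 0 \<longrightarrow> E \<psi> j Q = 0"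
    using rec_construct[of n E "\<lambda>_ _. 1"] loc by blast
  have "fmap_eq n (fcomp n \<phi> \<psi>) fid"
    unfolding fmap_eq_def
  proof (intro allI impI ballI)
    fix j Q assume j: "j < n" and Q: "Q \<in> multi_idx n"
    consider "mdeg n Q = 0" | "mdeg n Q = 1" | "2 \<le> mdeg n Q" by linarith
    then show "fcomp n \<phi> \<psi> j Q = fid j Q"
    proof cases
      case 1 then have "Q = zi" using mdeg0 Q by blast
      have "fcomp n \<phi> \<psi> j zi = \<phi> j zi" by (rule fcomp_zi)
      also have "\<dots> = 0" using fo j by (simp add: fixes_origin_def zi_def)
      finally show ?thesis using \<open>Q = zi\<close> by (simp add: fid_def)
    next
      case 2 then obtain q where q: "q < n" "Q = unit_idx q" using mdeg1 Q by blast
      have "fcomp n \<phi> \<psi> j Q = (\<Sum>m<n. \<phi> j (unit_idx m) * \<psi> m (unit_idx q))"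
        using fcomp_unit[OF fo\<psi> q(1)] q by simp
      also have "\<dots> = (\<Sum>m<n. if m = j then \<psi> m (unit_idx q) else 0)"
        by (rule sum.cong) (auto simp: phi_unit j)
      also have "\<dots> = \<psi> j (unit_idx q)" using j by simp
      finally show ?thesis using lin\<psi> j q unit_idx_multi_idx mdeg_unit_idx by simp
    next
      case 3 then show ?thesis using sol j Q by (simp add: E_def)
    qed
  qed
  then show ?thesis using fo\<psi> lin\<psi> by blast
qed

lemma inverse_exists:
  assumes fo: "fixes_origin n \<phi>" and lin: "\<forall>j<n. \<forall>Q\<in>multi_idx n. mdeg n Q = 1 \<longrightarrow> \<phi> j Q = fid j Q"
  shows "\<exists>\<psi>. formal_inverse n \<phi> \<psi>"
proof -
  obtain \<psi> where fo\<psi>: "fixes_origin n \<psi>" and lin\<psi>: "\<forall>j<n. \<forall>Q\<in>multi_idx n. mdeg n Q = 1 \<longrightarrow> \<psi> j Q = fid j Q"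
    and r: "fmap_eq n (fcomp n \<phi> \<psi>) fid"
    using right_inverse_exists[OF fo lin] by blast
  obtain \<chi> where fo\<chi>: "fixes_origin n \<chi>" and r2: "fmap_eq n (fcomp n \<psi> \<chi>) fid"
    using right_inverse_exists[OF fo\<psi> lin\<psi>] by blast
  have "fmap_eq n \<phi> (fcomp n \<phi> fid)" by (rule fmap_eq_sym, rule fcomp_fid_right)
  also have "fmap_eq n \<dots> (fcomp n \<phi> (fcomp n \<psi> \<chi>))" by (rule fcomp_cong2, rule fmap_eq_sym, rule r2)
  also have "fmap_eq n \<dots> (fcomp n (fcomp n \<phi> \<psi>) \<chi>)" by (rule fmap_eq_sym, rule fcomp_assoc_eq[OF fo\<psi> fo\<chi>])
  also have "fmap_eq n \<dots> (fcomp n fid \<chi>)" by (rule fcomp_cong1, rule r)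
  also have "fmap_eq n \<dots> \<chi>" by (rule fcomp_fid_left[OF fo\<chi>])
  finally have "fmap_eq n \<phi> \<chi>" .
  then have "fmap_eq n (fcomp n \<psi> \<phi>) (fcomp n \<psi> \<chi>)" by (rule fcomp_cong2)
  then have "fmap_eq n (fcomp n \<psi> \<phi>) fid" using r2 fmap_eq_trans by blast
  then show ?thesis using fo\<psi> r by (auto simp: formal_inverse_def)
qed


lemma lin_entry: "lin_part n g = T \<Longrightarrow> j < n \<Longrightarrow> m < n \<Longrightarrow> g j (unit_idx m) = T $$ (j,m)"
  unfolding lin_part_def by auto

lemma lin_part_carrier: "lin_part n g \<in> carrier_mat n n"
  by (simp add: lin_part_def)

lemma nonunit: "2 \<le> mdeg n Q \<Longrightarrow> \<forall>m<n. Q \<noteq> unit_idx m"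
  using mdeg_unit_idx by fastforce

lemma res_local:
  assumes g: "fixes_origin n g" and gT: "lin_part n g = T" and T: "lower n T"
    and p: "fixes_origin n \<phi>" and p': "fixes_origin n \<phi>'"
    and j: "j < n" and Q: "Q \<in> multi_idx n" and d: "2 \<le> mdeg n Q"
    and ag: "\<forall>j'<n. \<forall>Q'\<in>multi_idx n. ((j',Q'),(j,Q)) \<in> Rel n \<longrightarrow> \<phi> j' Q' = \<phi>' j' Q'"
  shows "(fcomp n g \<phi> j Q - fcomp n \<phi> (linmap n T) j Q) - (fcomp n g \<phi>' j Q - fcomp n \<phi>' (linmap n T) j Q)
         = Dg n T j Q * (\<phi> j Q - \<phi>' j Q)"
proof -
  define \<delta> where "\<delta> = (\<lambda>m R. \<phi> m R - \<phi>' m R)"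
  have e: "\<phi> = (\<lambda>m R. \<phi>' m R + \<delta> m R)" by (simp add: \<delta>_def)
  have dord: "\<forall>m<n. ordge n (mdeg n Q) (\<delta> m)"
    using ag by (auto simp: ordge_def \<delta>_def Rel_iff)
  have A: "fcomp n g \<phi> j Q - fcomp n g \<phi>' j Q = (\<Sum>m<n. T $$ (j,m) * \<delta> m Q)"
  proof -
    have "fcomp n g \<phi> j Q - fcomp n g \<phi>' j Q = S n (\<lambda>m R. \<phi>' m R + \<delta> m R) (g j) Q - S n \<phi>' (g j) Q"
      unfolding fcomp_S by (simp add: e[symmetric])
    also have "\<dots> = (\<Sum>m<n. g j (unit_idx m) * \<delta> m Q)"
      by (rule perturb) (use p' dord d Q in \<open>auto simp: fixes_origin_iff\<close>)
    also have "\<dots> = (\<Sum>m<n. T $$ (j,m) * \<delta> m Q)"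
      by (rule sum.cong) (auto simp: lin_entry[OF gT j])
    finally show ?thesis .
  qed
  have B: "fcomp n \<phi> (linmap n T) j Q - fcomp n \<phi>' (linmap n T) j Q = fcomp n \<delta> (linmap n T) j Q"
    unfolding fcomp_S \<delta>_def by (simp add: S_diff)
  have H: "(\<Sum>m<n. T $$ (j,m) * \<delta> m Q) - fcomp n \<delta> (linmap n T) j Q = Dg n T j Q * \<delta> j Q"
    by (rule homol[OF T j Q]) (use ag in \<open>auto simp: \<delta>_def\<close>)
  show ?thesis using A B H by (simp add: \<delta>_def algebra_simps)
qed

lemma expand:
  assumes ga: "fixes_origin n ga" and gb: "fixes_origin n gb" and p: "fixes_origin n \<phi>"
    and gaT: "lin_part n ga = Ta" and Ta: "Ta \<in> carrier_mat n n" and Tb: "Tb \<in> carrier_mat n n"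
    and d: "2 \<le> mdeg n Q" and Q: "Q \<in> multi_idx n" and j: "j < n"
    and rb: "\<forall>m<n. ordge n (mdeg n Q) (\<lambda>R. fcomp n gb \<phi> m R - fcomp n \<phi> (linmap n Tb) m R)"
  shows "fcomp n (fcomp n ga gb) \<phi> j Q = fcomp n \<phi> (linmap n (Ta * Tb)) j Q
        + fcomp n (\<lambda>m R. fcomp n ga \<phi> m R - fcomp n \<phi> (linmap n Ta) m R) (linmap n Tb) j Q
        + (\<Sum>m<n. Ta $$ (j,m) * (fcomp n gb \<phi> m Q - fcomp n \<phi> (linmap n Tb) m Q))"
proof -
  define u where "u = fcomp n \<phi> (linmap n Tb)"
  define rb' where "rb' = (\<lambda>m R. fcomp n gb \<phi> m R - u m R)"
  define ra where "ra = (\<lambda>m R. fcomp n ga \<phi> m R - fcomp n \<phi> (linmap n Ta) m R)"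
  have e1: "fcomp n gb \<phi> = (\<lambda>m R. u m R + rb' m R)" by (simp add: rb'_def)
  have e2: "fcomp n ga \<phi> = (\<lambda>m R. fcomp n \<phi> (linmap n Ta) m R + ra m R)" by (simp add: ra_def)
  have uo: "fixes_origin n u" unfolding u_def by (rule fixes_origin_fcomp[OF p])
  have lo: "\<And>T. fixes_origin n (linmap n T)" by (rule fixes_origin_linmap)
  have "fcomp n (fcomp n ga gb) \<phi> j Q = fcomp n ga (fcomp n gb \<phi>) j Q"
    using fcomp_assoc gb p Q by (simp add: fixes_origin_iff)
  also have "\<dots> = S n (\<lambda>m R. u m R + rb' m R) (ga j) Q" by (simp add: fcomp_S e1)
  also have "\<dots> = S n u (ga j) Q + (\<Sum>m<n. ga j (unit_idx m) * rb' m Q)"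
  proof -
    have "S n (\<lambda>m R. u m R + rb' m R) (ga j) Q - S n u (ga j) Q = (\<Sum>m<n. ga j (unit_idx m) * rb' m Q)"
      by (rule perturb) (use uo rb d Q in \<open>auto simp: fixes_origin_iff rb'_def u_def\<close>)
    then show ?thesis by (simp add: diff_eq_eq add_ac)
  qed
  also have "S n u (ga j) Q = fcomp n (fcomp n ga \<phi>) (linmap n Tb) j Q"
    using fcomp_assoc[of n \<phi> "linmap n Tb" Q ga j] p lo Q by (simp add: fixes_origin_iff fcomp_S u_def)
  also have "\<dots> = fcomp n (fcomp n \<phi> (linmap n Ta)) (linmap n Tb) j Q + fcomp n ra (linmap n Tb) j Q"
    by (simp add: e2 fcomp_S S_add)
  also have "fcomp n (fcomp n \<phi> (linmap n Ta)) (linmap n Tb) j Q = fcomp n \<phi> (fcomp n (linmap n Ta) (linmap n Tb)) j Q"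
    using fcomp_assoc lo Q by (simp add: fixes_origin_iff)
  also have "\<dots> = fcomp n \<phi> (linmap n (Ta * Tb)) j Q"
    using fcomp_cong2[OF linmap_comp[OF Ta Tb], of \<phi>] j Q by (simp add: fmap_eq_def)
  also have "(\<Sum>m<n. ga j (unit_idx m) * rb' m Q) = (\<Sum>m<n. Ta $$ (j,m) * rb' m Q)"
    by (rule sum.cong) (auto simp: lin_entry[OF gaT j])
  finally show ?thesis by (simp add: ra_def rb'_def u_def)
qed

lemma commuting_linear:
  assumes h: "fixes_origin n h"
    and T1: "T1 \<in> carrier_mat n n" "lower n T1" and T2: "T2 \<in> carrier_mat n n" "lower n T2"
    and nores: "\<forall>j<n. \<forall>Q\<in>multi_idx n. 2 \<le> mdeg n Q \<longrightarrow> Dg n T1 j Q \<noteq> 0 \<or> Dg n T2 j Q \<noteq> 0"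
    and c1: "fmap_eq n (fcomp n h (linmap n T1)) (fcomp n (linmap n T1) h)"
    and c2: "fmap_eq n (fcomp n h (linmap n T2)) (fcomp n (linmap n T2) h)"
  shows "is_linear_map n h"
proof -
  define L where "L = lin_part n h"
  have Lc: "L \<in> carrier_mat n n" by (simp add: L_def lin_part_carrier)
  define N where "N = (\<lambda>m R. h m R - linmap n L m R)"
  have hom0: "Dg n T j Q * N j Q = 0"
    if T: "T \<in> carrier_mat n n" "lower n T" and c: "fmap_eq n (fcomp n h (linmap n T)) (fcomp n (linmap n T) h)"
      and j: "j < n" and Q: "Q \<in> multi_idx n" and d: "2 \<le> mdeg n Q"
      and z: "\<forall>j'<n. \<forall>Q'\<in>multi_idx n. ((j',Q'),(j,Q)) \<in> Rel n \<longrightarrow> N j' Q' = 0" for T j Q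
  proof -
    have nu: "\<forall>m<n. Q \<noteq> unit_idx m" using nonunit[OF d] .
    have s1: "(\<Sum>m<n. T $$ (j,m) * N m Q) = fcomp n (linmap n T) h j Q"
      using fcomp_linmap_left[OF h Q] nu by (simp add: N_def linmap_nonunit)
    have s2: "fcomp n N (linmap n T) j Q = fcomp n h (linmap n T) j Q"
    proof -
      have "fcomp n N (linmap n T) j Q = fcomp n h (linmap n T) j Q - fcomp n (linmap n L) (linmap n T) j Q"
        unfolding fcomp_S N_def by (simp add: S_diff)
      moreover have "fcomp n (linmap n L) (linmap n T) j Q = linmap n (L * T) j Q"
        using linmap_comp[OF Lc T(1)] j Q by (simp add: fmap_eq_def)
      moreover have "linmap n (L * T) j Q = 0" using nu by (rule linmap_nonunit)
      ultimately show ?thesis by simp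
    qed
    have "(\<Sum>m<n. T $$ (j,m) * N m Q) - fcomp n N (linmap n T) j Q = Dg n T j Q * N j Q"
      by (rule homol[OF T(2) j Q z])
    then show ?thesis using s1 s2 c j Q by (simp add: fmap_eq_def)
  qed
  have claim: "\<forall>j Q. x = (j,Q) \<longrightarrow> j < n \<longrightarrow> Q \<in> multi_idx n \<longrightarrow> N j Q = 0" for x
  proof (induction x rule: wf_induct[OF wf_Rel[of n]])
    case (1 x)
    show ?case
    proof (intro allI impI)
      fix j Q assume x: "x = (j,Q)" and j: "j < n" and Q: "Q \<in> multi_idx n"
      consider "mdeg n Q = 0" | "mdeg n Q = 1" | "2 \<le> mdeg n Q" by linarith
      then show "N j Q = 0"
      proof cases
        case 1 then have "Q = zi" using mdeg0 Q by blast
        then show ?thesis using h j by (simp add: N_def fixes_origin_def zi_def[symmetric] linmap_def)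
      next
        case 2 then obtain l where l: "l < n" "Q = unit_idx l" using mdeg1 Q by blast
        then show ?thesis using j by (simp add: N_def linmap_unit L_def lin_part_def)
      next
        case 3
        have z: "\<forall>j'<n. \<forall>Q'\<in>multi_idx n. ((j',Q'),(j,Q)) \<in> Rel n \<longrightarrow> N j' Q' = 0"
          using 1 x by blast
        have "Dg n T1 j Q * N j Q = 0" by (rule hom0[OF T1 c1 j Q 3 z])
        moreover have "Dg n T2 j Q * N j Q = 0" by (rule hom0[OF T2 c2 j Q 3 z])
        ultimately show ?thesis using nores j Q 3 by auto
      qed
    qed
  qed
  show ?thesis
    unfolding is_linear_map_def
  proof (intro allI impI ballI)
    fix i Q assume i: "i < n" and Q: "Q \<in> multi_idx n" and d: "mdeg n Q \<noteq> 1"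
    show "h i Q = 0"
    proof (cases "mdeg n Q = 0")
      case True then have "Q = zi" using mdeg0 Q by blast
      then show ?thesis using h i by (simp add: fixes_origin_def zi_def)
    next
      case False
      then have "2 \<le> mdeg n Q" using d by linarith
      then have "linmap n L i Q = 0" using nonunit linmap_nonunit by blast
      moreover have "N i Q = 0" using claim i Q by blast
      ultimately show ?thesis by (simp add: N_def)
    qed
  qed
qed

lemma core:
  fixes g :: "nat \<Rightarrow> fmap" and K :: "nat set" and T1 T2 :: "complex mat"
  assumes K12: "1 \<in> K" "2 \<in> K"
    and fo: "\<forall>k\<in>K. fixes_origin n (g k)"
    and T1: "T1 \<in> carrier_mat n n" "lower n T1" "lin_part n (g 1) = T1"
    and T2: "T2 \<in> carrier_mat n n" "lower n T2" "lin_part n (g 2) = T2"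
    and nores: "\<forall>j<n. \<forall>Q\<in>multi_idx n. 2 \<le> mdeg n Q \<longrightarrow> Dg n T1 j Q \<noteq> 0 \<or> Dg n T2 j Q \<noteq> 0"
    and c1: "\<forall>k\<in>K. fmap_eq n (fcomp n (g 1) (g k)) (fcomp n (g k) (g 1))"
    and c2: "\<forall>k\<in>K. fmap_eq n (fcomp n (g 2) (g k)) (fcomp n (g k) (g 2))"
  shows "\<exists>\<phi> \<psi>. fixes_origin n \<phi> \<and> formal_inverse n \<phi> \<psi> \<and>
            (\<forall>k\<in>K. is_linear_map n (fcomp n \<psi> (fcomp n (g k) \<phi>)))"
proof -
  have g1: "fixes_origin n (g 1)" and g2: "fixes_origin n (g 2)" using fo K12 by auto
  have lo: "\<And>T. fixes_origin n (linmap n T)" by (rule fixes_origin_linmap)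
  have comm: "T1 * T2 = T2 * T1"
  proof -
    have "T1 * T2 = lin_part n (fcomp n (g 1) (g 2))" using lin_part_fcomp[OF g2] T1 T2 by simp
    also have "\<dots> = lin_part n (fcomp n (g 2) (g 1))" using c1 K12 lin_part_cong by blast
    also have "\<dots> = T2 * T1" using lin_part_fcomp[OF g1] T1 T2 by simp
    finally show ?thesis .
  qed
  define R where "R = (\<lambda>k \<phi> j Q. fcomp n (g k) \<phi> j Q - fcomp n \<phi> (linmap n (if k = 1 then T1 else T2)) j Q)"
  define E where "E = (\<lambda>\<phi> j Q. if Dg n T1 j Q \<noteq> 0 then R 1 \<phi> j Q else R 2 \<phi> j Q)"
  define Dv where "Dv = (\<lambda>j Q. if Dg n T1 j Q \<noteq> 0 then Dg n T1 j Q else Dg n T2 j Q)"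
  have loc: "E \<phi> j Q - E \<phi>' j Q = Dv j Q * (\<phi> j Q - \<phi>' j Q)"
    if j: "j < n" and Q: "Q \<in> multi_idx n" and d: "2 \<le> mdeg n Q" and p: "fixes_origin n \<phi>"
      and p': "fixes_origin n \<phi>'"
      and ag: "\<forall>j'<n. \<forall>Q'\<in>multi_idx n. ((j',Q'),(j,Q)) \<in> Rel n \<longrightarrow> \<phi> j' Q' = \<phi>' j' Q'" for \<phi> \<phi>' j Q
    using res_local[OF g1 T1(3) T1(2) p p' j Q d ag] res_local[OF g2 T2(3) T2(2) p p' j Q d ag]
    by (simp add: E_def Dv_def R_def)
  obtain \<phi> where fo\<phi>: "fixes_origin n \<phi>" and lin\<phi>: "\<forall>j<n. \<forall>Q\<in>multi_idx n. mdeg n Q = 1 \<longrightarrow> \<phi> j Q = fid j Q"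
    and sol: "\<forall>j<n. \<forall>Q\<in>multi_idx n. 2 \<le> mdeg n Q \<longrightarrow> Dv j Q \<noteq> 0 \<longrightarrow> E \<phi> j Q = 0"
    using rec_construct[of n E Dv] loc by blast
  define r1 where "r1 = (\<lambda>m Q. fcomp n (g 1) \<phi> m Q - fcomp n \<phi> (linmap n T1) m Q)"
  define r2 where "r2 = (\<lambda>m Q. fcomp n (g 2) \<phi> m Q - fcomp n \<phi> (linmap n T2) m Q)"
  have sol1: "r1 j Q = 0" if "j < n" "Q \<in> multi_idx n" "2 \<le> mdeg n Q" "Dg n T1 j Q \<noteq> 0" for j Q
  proof -
    have "E \<phi> j Q = 0" using sol that by (auto simp: Dv_def)
    then show ?thesis using that(4) by (simp add: E_def R_def r1_def)
  qed
  have sol2: "r2 j Q = 0" if "j < n" "Q \<in> multi_idx n" "2 \<le> mdeg n Q" "Dg n T1 j Q = 0" for j Q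
  proof -
    have "Dg n T2 j Q \<noteq> 0" using nores that by blast
    then have "E \<phi> j Q = 0" using sol that by (auto simp: Dv_def)
    then show ?thesis using that(4) by (simp add: E_def R_def r2_def)
  qed
  have phi_unit: "\<phi> j (unit_idx m) = (if m = j then 1 else 0)" if "j < n" "m < n" for j m
    using lin\<phi> that unit_idx_multi_idx mdeg_unit_idx by (auto simp: fid_def unit_idx_inj)
  have lowdeg: "fcomp n g' \<phi> j Q - fcomp n \<phi> (linmap n T) j Q = 0"
    if g': "fixes_origin n g'" "lin_part n g' = T" and j: "j < n" and Q: "Q \<in> multi_idx n" and d: "mdeg n Q \<le> 1" for g' T j Q
  proof (cases "mdeg n Q = 0")
    case True then have "Q = zi" using mdeg0 Q by blast
    have "fcomp n g' \<phi> j zi = g' j zi" "fcomp n \<phi> (linmap n T) j zi = \<phi> j zi" by (rule fcomp_zi)+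
    then show ?thesis using g' fo\<phi> j \<open>Q = zi\<close> by (simp add: fixes_origin_def zi_def)
  next
    case False then obtain q where q: "q < n" "Q = unit_idx q" using mdeg1 Q d by (metis le_neq_implies_less less_one)
    have a: "fcomp n g' \<phi> j Q = T $$ (j,q)"
    proof -
      have "fcomp n g' \<phi> j Q = (\<Sum>m<n. g' j (unit_idx m) * \<phi> m (unit_idx q))"
        using fcomp_unit[OF fo\<phi> q(1)] q by simp
      also have "\<dots> = (\<Sum>m<n. if m = q then T $$ (j,m) else 0)"
        by (rule sum.cong) (auto simp: phi_unit lin_entry[OF g'(2) j] q)
      finally show ?thesis using q by simp
    qed
    have b: "fcomp n \<phi> (linmap n T) j Q = T $$ (j,q)"
    proof -
      have "fcomp n \<phi> (linmap n T) j Q = (\<Sum>m<n. \<phi> j (unit_idx m) * linmap n T m (unit_idx q))"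
        using fcomp_unit[OF lo q(1)] q by simp
      also have "\<dots> = (\<Sum>m<n. if m = j then T $$ (m,q) else 0)"
        by (rule sum.cong) (auto simp: phi_unit j linmap_unit q)
      finally show ?thesis using j by simp
    qed
    show ?thesis using a b by simp
  qed
  have allzero: "\<forall>j Q. x = (j,Q) \<longrightarrow> j < n \<longrightarrow> Q \<in> multi_idx n \<longrightarrow> r1 j Q = 0 \<and> r2 j Q = 0" for x
  proof (induction x rule: wf_induct[OF wf_Rel[of n]])
    case (1 x)
    show ?case
    proof (intro allI impI)
      fix j Q assume x: "x = (j,Q)" and j: "j < n" and Q: "Q \<in> multi_idx n"
      show "r1 j Q = 0 \<and> r2 j Q = 0"
      proof (cases "mdeg n Q \<le> 1")
        case True then show ?thesis
          using lowdeg[OF g1 T1(3) j Q] lowdeg[OF g2 T2(3) j Q] by (simp add: r1_def r2_def)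
      next
        case False
        then have d: "2 \<le> mdeg n Q" by simp
        have z: "\<forall>j'<n. \<forall>Q'\<in>multi_idx n. ((j',Q'),(j,Q)) \<in> Rel n \<longrightarrow> r1 j' Q' = 0 \<and> r2 j' Q' = 0"
          using 1 x by blast
        have o1: "\<forall>m<n. ordge n (mdeg n Q) (\<lambda>R. fcomp n (g 1) \<phi> m R - fcomp n \<phi> (linmap n T1) m R)"
          using z by (auto simp: ordge_def r1_def Rel_iff)
        have o2: "\<forall>m<n. ordge n (mdeg n Q) (\<lambda>R. fcomp n (g 2) \<phi> m R - fcomp n \<phi> (linmap n T2) m R)"
          using z by (auto simp: ordge_def r2_def Rel_iff)
        have X: "fcomp n (fcomp n (g 1) (g 2)) \<phi> j Q = fcomp n \<phi> (linmap n (T1 * T2)) j Q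
            + fcomp n r1 (linmap n T2) j Q + (\<Sum>m<n. T1 $$ (j,m) * r2 m Q)"
          using expand[OF g1 g2 fo\<phi> T1(3) T1(1) T2(1) d Q j o2] by (simp add: r1_def r2_def)
        have Y: "fcomp n (fcomp n (g 2) (g 1)) \<phi> j Q = fcomp n \<phi> (linmap n (T2 * T1)) j Q
            + fcomp n r2 (linmap n T1) j Q + (\<Sum>m<n. T2 $$ (j,m) * r1 m Q)"
          using expand[OF g2 g1 fo\<phi> T2(3) T2(1) T1(1) d Q j o1] by (simp add: r1_def r2_def)
        have "fcomp n (fcomp n (g 1) (g 2)) \<phi> j Q = fcomp n (fcomp n (g 2) (g 1)) \<phi> j Q"
          using fcomp_cong1[of n "fcomp n (g 1) (g 2)" "fcomp n (g 2) (g 1)" \<phi>] c1 K12 j Q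
          by (simp add: fmap_eq_def)
        then have rel: "(\<Sum>m<n. T1 $$ (j,m) * r2 m Q) - fcomp n r2 (linmap n T1) j Q
                   = (\<Sum>m<n. T2 $$ (j,m) * r1 m Q) - fcomp n r1 (linmap n T2) j Q"
          using X Y comm by (simp add: algebra_simps)
        have h1: "(\<Sum>m<n. T1 $$ (j,m) * r2 m Q) - fcomp n r2 (linmap n T1) j Q = Dg n T1 j Q * r2 j Q"
          by (rule homol[OF T1(2) j Q]) (use z in auto)
        have h2: "(\<Sum>m<n. T2 $$ (j,m) * r1 m Q) - fcomp n r1 (linmap n T2) j Q = Dg n T2 j Q * r1 j Q"
          by (rule homol[OF T2(2) j Q]) (use z in auto)
        have eq: "Dg n T1 j Q * r2 j Q = Dg n T2 j Q * r1 j Q" using rel h1 h2 by simp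
        show ?thesis
        proof (cases "Dg n T1 j Q = 0")
          case True
          then have "r2 j Q = 0" using sol2 j Q d by blast
          moreover have "Dg n T2 j Q \<noteq> 0" using nores j Q d True by blast
          ultimately show ?thesis using eq True by simp
        next
          case False
          then have "r1 j Q = 0" using sol1 j Q d by blast
          then show ?thesis using eq False by simp
        qed
      qed
    qed
  qed
  have conj1: "fmap_eq n (fcomp n (g 1) \<phi>) (fcomp n \<phi> (linmap n T1))"
    using allzero by (auto simp: fmap_eq_def r1_def)
  have conj2: "fmap_eq n (fcomp n (g 2) \<phi>) (fcomp n \<phi> (linmap n T2))"
    using allzero by (auto simp: fmap_eq_def r2_def)
  obtain \<psi> where inv: "formal_inverse n \<phi> \<psi>" using inverse_exists[OF fo\<phi> lin\<phi>] by blast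
  have fo\<psi>: "fixes_origin n \<psi>" and pq: "fmap_eq n (fcomp n \<phi> \<psi>) fid" and qp: "fmap_eq n (fcomp n \<psi> \<phi>) fid"
    using inv by (auto simp: formal_inverse_def)
  define G where "G = (\<lambda>k. fcomp n \<psi> (fcomp n (g k) \<phi>))"
  have Gfo: "fixes_origin n (G k)" for k unfolding G_def by (rule fixes_origin_fcomp[OF fo\<psi>])
  have Glin: "fmap_eq n (G k) (linmap n T)" if gk: "fmap_eq n (fcomp n (g k) \<phi>) (fcomp n \<phi> (linmap n T))" for k T
  proof -
    have "fmap_eq n (G k) (fcomp n \<psi> (fcomp n \<phi> (linmap n T)))" unfolding G_def by (rule fcomp_cong2[OF gk])
    also have "fmap_eq n \<dots> (fcomp n (fcomp n \<psi> \<phi>) (linmap n T))"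
      by (rule fmap_eq_sym, rule fcomp_assoc_eq[OF fo\<phi> lo])
    also have "fmap_eq n \<dots> (fcomp n fid (linmap n T))" by (rule fcomp_cong1[OF qp])
    also have "fmap_eq n \<dots> (linmap n T)" by (rule fcomp_fid_left[OF lo])
    finally show ?thesis .
  qed
  have G1: "fmap_eq n (G 1) (linmap n T1)" by (rule Glin[OF conj1])
  have G2: "fmap_eq n (G 2) (linmap n T2)" by (rule Glin[OF conj2])
  have Gcomm: "fmap_eq n (fcomp n (G k) (linmap n T)) (fcomp n (linmap n T) (G k))"
    if k: "k \<in> K" and l: "l \<in> K" and Gl: "fmap_eq n (G l) (linmap n T)"
      and c: "fmap_eq n (fcomp n (g l) (g k)) (fcomp n (g k) (g l))" for k l T
  proof -
    have gk: "fixes_origin n (g k)" and gl: "fixes_origin n (g l)" using fo k l by auto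
    have "fmap_eq n (fcomp n (G k) (linmap n T)) (fcomp n (G k) (G l))"
      by (rule fcomp_cong2, rule fmap_eq_sym, rule Gl)
    also have "fmap_eq n \<dots> (fcomp n \<psi> (fcomp n (fcomp n (g k) (g l)) \<phi>))"
      unfolding G_def by (rule fmap_eq_sym, rule conj_mult[OF gk gl fo\<phi> fo\<psi> pq])
    also have "fmap_eq n \<dots> (fcomp n \<psi> (fcomp n (fcomp n (g l) (g k)) \<phi>))"
      by (rule fcomp_cong2, rule fcomp_cong1, rule fmap_eq_sym, rule c)
    also have "fmap_eq n \<dots> (fcomp n (G l) (G k))"
      unfolding G_def by (rule conj_mult[OF gl gk fo\<phi> fo\<psi> pq])
    also have "fmap_eq n \<dots> (fcomp n (linmap n T) (G k))"
      by (rule fcomp_cong1[OF Gl])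
    finally show ?thesis .
  qed
  have "\<forall>k\<in>K. is_linear_map n (G k)"
  proof
    fix k assume k: "k \<in> K"
    show "is_linear_map n (G k)"
      by (rule commuting_linear[OF Gfo T1(1,2) T2(1,2) nores])
         (use Gcomm[OF k K12(1) G1] Gcomm[OF k K12(2) G2] c1 c2 k in auto)
  qed
  then show ?thesis using fo\<phi> inv unfolding G_def by blast
qed


lemma is_linear_map_cong: "fmap_eq n F G \<Longrightarrow> is_linear_map n G \<Longrightarrow> is_linear_map n F"
  by (auto simp: fmap_eq_def is_linear_map_def)

lemma lower_ajf: "almost_jordan_form n T \<Longrightarrow> lower n T"
  unfolding almost_jordan_form_def lower_def by auto

theorem corollary2p7:
  fixes n h :: nat and f :: "nat \<Rightarrow> fmap"
  assumes "h \<ge> 2"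
    and "\<forall>k\<in>{1..h}. biholo_germ n (f k)"
    and "\<exists>A B. almost_simul_jordan_basis n (lin_part n (f 1)) (lin_part n (f 2)) A B \<and>
           (\<forall>j<n. Res n (\<lambda>i. (B * lin_part n (f 1) * A) $$ (i,i)) j \<inter>
                  Res n (\<lambda>i. (B * lin_part n (f 2) * A) $$ (i,i)) j = {})"
    and "\<forall>k\<in>{1..h}. fmap_eq n (fcomp n (f 1) (f k)) (fcomp n (f k) (f 1))"
    and "\<forall>k\<in>{1..h}. fmap_eq n (fcomp n (f 2) (f k)) (fcomp n (f k) (f 2))"
  shows "simul_formally_linearizable n {1..h} f"
proof -
  obtain A B where basis: "almost_simul_jordan_basis n (lin_part n (f 1)) (lin_part n (f 2)) A B"
    and nr: "\<forall>j<n. Res n (\<lambda>i. (B * lin_part n (f 1) * A) $$ (i,i)) j \<inter>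
                  Res n (\<lambda>i. (B * lin_part n (f 2) * A) $$ (i,i)) j = {}"
    using assms(3) by blast
  have A: "A \<in> carrier_mat n n" and B: "B \<in> carrier_mat n n" and AB: "A * B = 1\<^sub>m n" and BA: "B * A = 1\<^sub>m n"
    and aj1: "almost_jordan_form n (B * lin_part n (f 1) * A)"
    and aj2: "almost_jordan_form n (B * lin_part n (f 2) * A)"
    using basis by (auto simp: almost_simul_jordan_basis_def)
  define K where "K = {1..h}"
  have K12: "1 \<in> K" "2 \<in> K" using assms(1) by (auto simp: K_def)
  have fof: "\<forall>k\<in>K. fixes_origin n (f k)" using assms(2) by (auto simp: K_def biholo_germ_def)
  define A' where "A' = linmap n A"
  define B' where "B' = linmap n B"
  have foA: "fixes_origin n A'" and foB: "fixes_origin n B'"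
    by (simp_all add: A'_def B'_def fixes_origin_linmap)
  have AB': "fmap_eq n (fcomp n A' B') fid"
  proof -
    have "fmap_eq n (fcomp n A' B') (linmap n (A * B))" unfolding A'_def B'_def by (rule linmap_comp[OF A B])
    moreover have "fmap_eq n (linmap n (A * B)) fid" using linmap_one AB by simp
    ultimately show ?thesis by (rule fmap_eq_trans)
  qed
  have BA': "fmap_eq n (fcomp n B' A') fid"
  proof -
    have "fmap_eq n (fcomp n B' A') (linmap n (B * A))" unfolding A'_def B'_def by (rule linmap_comp[OF B A])
    moreover have "fmap_eq n (linmap n (B * A)) fid" using linmap_one BA by simp
    ultimately show ?thesis by (rule fmap_eq_trans)
  qed
  define g where "g = (\<lambda>k. fcomp n B' (fcomp n (f k) A'))"
  have fog: "\<forall>k\<in>K. fixes_origin n (g k)" unfolding g_def using foB by (simp add: fixes_origin_fcomp)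
  have lpg: "lin_part n (g k) = B * lin_part n (f k) * A" if k: "k \<in> K" for k
  proof -
    have fo1: "fixes_origin n (fcomp n (f k) A')" using fof k by (simp add: fixes_origin_fcomp)
    have L1: "lin_part n (g k) = lin_part n B' * lin_part n (fcomp n (f k) A')"
      unfolding g_def by (rule lin_part_fcomp[OF fo1])
    have L2: "lin_part n (fcomp n (f k) A') = lin_part n (f k) * lin_part n A'"
      by (rule lin_part_fcomp[OF foA])
    have LA: "lin_part n A' = A" unfolding A'_def by (rule lin_part_linmap[OF A])
    have LB: "lin_part n B' = B" unfolding B'_def by (rule lin_part_linmap[OF B])
    have "lin_part n (g k) = B * (lin_part n (f k) * A)" unfolding L1 L2 LA LB ..
    also have "\<dots> = B * lin_part n (f k) * A"
      by (rule assoc_mult_mat[OF B lin_part_carrier A, symmetric])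
    finally show ?thesis .
  qed
  define T1 where "T1 = B * lin_part n (f 1) * A"
  define T2 where "T2 = B * lin_part n (f 2) * A"
  have T1c: "T1 \<in> carrier_mat n n" unfolding T1_def using A B lin_part_carrier[of n "f 1"] by auto
  have T2c: "T2 \<in> carrier_mat n n" unfolding T2_def using A B lin_part_carrier[of n "f 2"] by auto
  have nr': "\<forall>j<n. Res n (\<lambda>i. T1 $$ (i,i)) j \<inter> Res n (\<lambda>i. T2 $$ (i,i)) j = {}"
    using nr unfolding T1_def T2_def .
  have nores: "\<forall>j<n. \<forall>Q\<in>multi_idx n. 2 \<le> mdeg n Q \<longrightarrow> Dg n T1 j Q \<noteq> 0 \<or> Dg n T2 j Q \<noteq> 0"
  proof (intro allI impI ballI)
    fix j Q assume j: "j < n" and Q: "Q \<in> multi_idx n" and d: "2 \<le> mdeg n Q"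
    show "Dg n T1 j Q \<noteq> 0 \<or> Dg n T2 j Q \<noteq> 0"
    proof (rule ccontr)
      assume "\<not> ?thesis"
      then have "Q \<in> Res n (\<lambda>i. T1 $$ (i,i)) j" "Q \<in> Res n (\<lambda>i. T2 $$ (i,i)) j"
        using Q d by (auto simp: Res_def Dg_def)
      then show False using nr' j by blast
    qed
  qed
  have comm: "fmap_eq n (fcomp n (g l) (g k)) (fcomp n (g k) (g l))"
    if k: "k \<in> K" and l: "l \<in> K" and c: "fmap_eq n (fcomp n (f l) (f k)) (fcomp n (f k) (f l))" for k l
  proof -
    have fk: "fixes_origin n (f k)" and fl: "fixes_origin n (f l)" using fof k l by auto
    have "fmap_eq n (fcomp n (g l) (g k)) (fcomp n B' (fcomp n (fcomp n (f l) (f k)) A'))"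
      unfolding g_def by (rule fmap_eq_sym, rule conj_mult[OF fl fk foA foB AB'])
    also have "fmap_eq n \<dots> (fcomp n B' (fcomp n (fcomp n (f k) (f l)) A'))"
      by (rule fcomp_cong2, rule fcomp_cong1, rule c)
    also have "fmap_eq n \<dots> (fcomp n (g k) (g l))"
      unfolding g_def by (rule conj_mult[OF fk fl foA foB AB'])
    finally show ?thesis .
  qed
  obtain \<phi> \<psi> where fo\<phi>: "fixes_origin n \<phi>" and inv: "formal_inverse n \<phi> \<psi>"
    and lin: "\<forall>k\<in>K. is_linear_map n (fcomp n \<psi> (fcomp n (g k) \<phi>))"
  proof -
    have "\<exists>\<phi> \<psi>. fixes_origin n \<phi> \<and> formal_inverse n \<phi> \<psi> \<and> (\<forall>k\<in>K. is_linear_map n (fcomp n \<psi> (fcomp n (g k) \<phi>)))"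
    proof (rule core[OF K12 fog T1c lower_ajf _ T2c lower_ajf])
      show "almost_jordan_form n T1" using aj1 by (simp add: T1_def)
      show "almost_jordan_form n T2" using aj2 by (simp add: T2_def)
      show "lin_part n (g 1) = T1" using lpg K12 by (simp add: T1_def)
      show "lin_part n (g 2) = T2" using lpg K12 by (simp add: T2_def)
      show "\<forall>j<n. \<forall>Q\<in>multi_idx n. 2 \<le> mdeg n Q \<longrightarrow> Dg n T1 j Q \<noteq> 0 \<or> Dg n T2 j Q \<noteq> 0" by (rule nores)
      show "\<forall>k\<in>K. fmap_eq n (fcomp n (g 1) (g k)) (fcomp n (g k) (g 1))"
      proof
        fix k assume k: "k \<in> K"
        show "fmap_eq n (fcomp n (g 1) (g k)) (fcomp n (g k) (g 1))"
          by (rule comm[OF k K12(1)]) (use assms(4) k in \<open>simp add: K_def\<close>)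
      qed
      show "\<forall>k\<in>K. fmap_eq n (fcomp n (g 2) (g k)) (fcomp n (g k) (g 2))"
      proof
        fix k assume k: "k \<in> K"
        show "fmap_eq n (fcomp n (g 2) (g k)) (fcomp n (g k) (g 2))"
          by (rule comm[OF k K12(2)]) (use assms(5) k in \<open>simp add: K_def\<close>)
      qed
    qed
    then show ?thesis using that by blast
  qed
  have fo\<psi>: "fixes_origin n \<psi>" and pq: "fmap_eq n (fcomp n \<phi> \<psi>) fid" and qp: "fmap_eq n (fcomp n \<psi> \<phi>) fid"
    using inv by (auto simp: formal_inverse_def)
  define \<Phi> where "\<Phi> = fcomp n A' \<phi>"
  define \<Psi> where "\<Psi> = fcomp n \<psi> B'"
  have fo\<Phi>: "fixes_origin n \<Phi>" unfolding \<Phi>_def by (rule fixes_origin_fcomp[OF foA])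
  have fo\<Psi>: "fixes_origin n \<Psi>" unfolding \<Psi>_def by (rule fixes_origin_fcomp[OF fo\<psi>])
  have e1: "fmap_eq n (fcomp n \<Phi> \<Psi>) fid"
  proof -
    have "fmap_eq n (fcomp n \<Phi> \<Psi>) (fcomp n A' (fcomp n \<phi> \<Psi>))"
      unfolding \<Phi>_def by (rule fcomp_assoc_eq[OF fo\<phi> fo\<Psi>])
    also have "fmap_eq n \<dots> (fcomp n A' (fcomp n (fcomp n \<phi> \<psi>) B'))"
      unfolding \<Psi>_def by (rule fcomp_cong2, rule fmap_eq_sym, rule fcomp_assoc_eq[OF fo\<psi> foB])
    also have "fmap_eq n \<dots> (fcomp n A' (fcomp n fid B'))"
      by (rule fcomp_cong2, rule fcomp_cong1, rule pq)
    also have "fmap_eq n \<dots> (fcomp n A' B')"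
      by (rule fcomp_cong2, rule fcomp_fid_left[OF foB])
    also have "fmap_eq n \<dots> fid" by (rule AB')
    finally show ?thesis .
  qed
  have e2: "fmap_eq n (fcomp n \<Psi> \<Phi>) fid"
  proof -
    have "fmap_eq n (fcomp n \<Psi> \<Phi>) (fcomp n \<psi> (fcomp n B' \<Phi>))"
      unfolding \<Psi>_def by (rule fcomp_assoc_eq[OF foB fo\<Phi>])
    also have "fmap_eq n \<dots> (fcomp n \<psi> (fcomp n (fcomp n B' A') \<phi>))"
      unfolding \<Phi>_def by (rule fcomp_cong2, rule fmap_eq_sym, rule fcomp_assoc_eq[OF foA fo\<phi>])
    also have "fmap_eq n \<dots> (fcomp n \<psi> (fcomp n fid \<phi>))"
      by (rule fcomp_cong2, rule fcomp_cong1, rule BA')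
    also have "fmap_eq n \<dots> (fcomp n \<psi> \<phi>)"
      by (rule fcomp_cong2, rule fcomp_fid_left[OF fo\<phi>])
    also have "fmap_eq n \<dots> fid" by (rule qp)
    finally show ?thesis .
  qed
  have e3: "fmap_eq n (fcomp n \<Psi> (fcomp n (f k) \<Phi>)) (fcomp n \<psi> (fcomp n (g k) \<phi>))" if k: "k \<in> K" for k
  proof -
    have fk: "fixes_origin n (f k)" using fof k by auto
    have fkA: "fixes_origin n (fcomp n (f k) A')" using fixes_origin_fcomp[OF fk] .
    have "fmap_eq n (fcomp n \<Psi> (fcomp n (f k) \<Phi>)) (fcomp n \<psi> (fcomp n B' (fcomp n (f k) \<Phi>)))"
      unfolding \<Psi>_def by (rule fcomp_assoc_eq[OF foB fixes_origin_fcomp[OF fk]])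
    also have "fmap_eq n \<dots> (fcomp n \<psi> (fcomp n B' (fcomp n (fcomp n (f k) A') \<phi>)))"
      unfolding \<Phi>_def by (rule fcomp_cong2, rule fcomp_cong2, rule fmap_eq_sym, rule fcomp_assoc_eq[OF foA fo\<phi>])
    also have "fmap_eq n \<dots> (fcomp n \<psi> (fcomp n (fcomp n B' (fcomp n (f k) A')) \<phi>))"
      by (rule fcomp_cong2, rule fmap_eq_sym, rule fcomp_assoc_eq[OF fkA fo\<phi>])
    finally show ?thesis by (simp add: g_def)
  qed
  have fi: "formal_inverse n \<Phi> \<Psi>" using fo\<Psi> e1 e2 by (simp add: formal_inverse_def)
  have li: "\<forall>k\<in>K. is_linear_map n (fcomp n \<Psi> (fcomp n (f k) \<Phi>))"
  proof
    fix k assume k: "k \<in> K"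
    show "is_linear_map n (fcomp n \<Psi> (fcomp n (f k) \<Phi>))"
      by (rule is_linear_map_cong[OF e3[OF k]]) (use lin k in blast)
  qed
  show ?thesis unfolding simul_formally_linearizable_def K_def[symmetric]
    by (rule exI[of _ \<Phi>], rule exI[of _ \<Psi>]) (use fo\<Phi> fi li in blast)
qed


end
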